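(* Assume $h\in\mathcal H$, where $\mathcal H=\{h: h>S/\ln(1+S/\lambda_0)-S-\lambda_0\}$. (iii) $J_{\rm K\text{-}L}$ attains its unique minimum over $\Theta$ at a point $\hat\vartheta$, which is the unique solution of $J'_{\rm K\text{-}L}(\hat\vartheta)=0$. Its location depends on the sign of $h$: - if $h>0$, then $\hat\vartheta\in(\vartheta_0-\delta,\vartheta_0)$; - if $h<0$, then $\hat\vartheta\in(\vartheta_0,\vartheta_0+\delta)$; - if $h=0$, then $\hat\vartheta=\vartheta_0$. (iv) If in addition $h\neq0$, there exist constants $m,M>0$ such that for all $\vartheta\in\Theta$ $$m|\vartheta-\hat\vartheta|\le|J'_{\rm K\text{-}L}(\vartheta)|\le M|\vartheta-\hat\vartheta|$$ and $$\frac m2(\vartheta-\hat\vartheta)^2\le J_{\rm K\text{-}L}(\vartheta)-J_{\rm K\text{-}L}(\hat\vartheta)\le\frac M2(\vartheta-\hat\vartheta)^2.$$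
   Context: Fix constants $S>0$, $\lambda_0>0$, $\kappa\in(0,1/2)$, $\delta>0$, $\tau>0$, and reals $\alpha<\beta$ such that $(\alpha-\delta,\beta+\delta)\subset(0,\tau-\delta)$. Put $\Theta_0=(\alpha,\beta)$ and $\Theta=(\alpha-\delta,\beta+\delta)$. Let $$\psi(x)=(x/\delta)^\kappa\mathbf 1_{\{0<x<\delta\}}+\mathbf 1_{\{x\ge\delta\}}.$$ The theoretical intensity is $\lambda(\vartheta,t)=S\psi(t-\vartheta)+\lambda_0$ for $t\in[0,\tau]$, $\vartheta\in\Theta$. The true intensity is $\lambda_*(\vartheta_0,t)=(S+h)\psi(t-\vartheta_0)+\lambda_0$, with fixed $\vartheta_0\in\Theta_0$ and fixed $h\in\mathbb R$. The Kullback–Leibler divergence is $$J_{\rm K\text{-}L}(\vartheta)=\int_{\vartheta\wedge\vartheta_0}^\tau\Bigl[\frac{\lambda(\vartheta,t)}{\lambda_*(\vartheta_0,t)}-1-\ln\frac{\lambda(\vartheta,t)}{\lambda_*(\vartheta_0,t)}\Bigr]\lambda_*(\vartheta_0,t)\,dt,\qquad\vartheta\in\Theta.$$ *)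

theory Defs
  imports "HOL-Analysis.Analysis"
begin

definition psi :: "real \<Rightarrow> real \<Rightarrow> real \<Rightarrow> real" where
  "psi \<kappa> \<delta> x = (if 0 < x \<and> x < \<delta> then (x / \<delta>) powr \<kappa> else if x \<ge> \<delta> then 1 else 0)"

definition lam :: "real \<Rightarrow> real \<Rightarrow> real \<Rightarrow> real \<Rightarrow> real \<Rightarrow> real \<Rightarrow> real" where
  "lam S lam0 \<kappa> \<delta> th t = S * psi \<kappa> \<delta> (t - th) + lam0"

definition lam_star :: "real \<Rightarrow> real \<Rightarrow> real \<Rightarrow> real \<Rightarrow> real \<Rightarrow> real \<Rightarrow> real \<Rightarrow> real" where
  "lam_star S h lam0 \<kappa> \<delta> th0 t = (S + h) * psi \<kappa> \<delta> (t - th0) + lam0"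

definition JKL :: "real \<Rightarrow> real \<Rightarrow> real \<Rightarrow> real \<Rightarrow> real \<Rightarrow> real \<Rightarrow> real \<Rightarrow> real \<Rightarrow> real" where
  "JKL S lam0 \<kappa> \<delta> \<tau> th0 h th =
     integral {min th th0..\<tau>}
       (\<lambda>t. (lam S lam0 \<kappa> \<delta> th t / lam_star S h lam0 \<kappa> \<delta> th0 t - 1
              - ln (lam S lam0 \<kappa> \<delta> th t / lam_star S h lam0 \<kappa> \<delta> th0 t))
             * lam_star S h lam0 \<kappa> \<delta> th0 t)"

end

theory Submission
  imports Defs
begin

lemma psi_alt:
  assumes "\<delta> > 0"
  shows "psi \<kappa> \<delta> x = (min (max x 0) \<delta> / \<delta>) powr \<kappa>"
  using assms by (auto simp: psi_def min_def max_def)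

lemma psi_cont:
  assumes "\<delta> > 0" "\<kappa> > 0"
  shows "continuous_on A (psi \<kappa> \<delta>)"
proof -
  have "continuous_on A (\<lambda>x. (min (max x 0) \<delta> / \<delta>) powr \<kappa>)"
    using assms by (intro continuous_on_powr' continuous_intros) (auto simp: min_def max_def)
  then show ?thesis using psi_alt[OF assms(1)] by simp
qed

lemma psi_nonneg: "0 \<le> psi \<kappa> \<delta> x"
  by (auto simp: psi_def)

lemma psi_le1: assumes "\<delta> > 0" "\<kappa> > 0" shows "psi \<kappa> \<delta> x \<le> 1"
  using assms by (auto simp: psi_def intro!: powr_le1)

lemma psi_zero: "x \<le> 0 \<Longrightarrow> \<delta> > 0 \<Longrightarrow> psi \<kappa> \<delta> x = 0"
  by (auto simp: psi_def)

lemma psi_one: "x \<ge> \<delta> \<Longrightarrow> psi \<kappa> \<delta> x = 1"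
  by (auto simp: psi_def)

lemma psi_mono:
  assumes "\<delta> > 0" "\<kappa> > 0" "x \<le> y"
  shows "psi \<kappa> \<delta> x \<le> psi \<kappa> \<delta> y"
  unfolding psi_alt[OF assms(1)]
  using assms by (intro powr_mono2 divide_right_mono) (auto simp: min_def max_def)

lemma psi_strict:
  assumes "\<delta> > 0" "\<kappa> > 0" "x < y" "0 < y" "x < \<delta>"
  shows "psi \<kappa> \<delta> x < psi \<kappa> \<delta> y"
  unfolding psi_alt[OF assms(1)]
  using assms by (intro powr_less_mono2 divide_strict_right_mono) (auto simp: min_def max_def)

definition phi :: "real \<Rightarrow> real \<Rightarrow> real \<Rightarrow> real" where
  "phi \<kappa> \<delta> w = \<delta> * w powr (1/\<kappa>)"

lemma phi_psi:
  assumes "\<delta> > 0" "\<kappa> > 0" "0 \<le> y" "y \<le> \<delta>"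
  shows "phi \<kappa> \<delta> (psi \<kappa> \<delta> y) = y"
proof -
  have "psi \<kappa> \<delta> y = (y/\<delta>) powr \<kappa>" using assms by (simp add: psi_alt min_def max_def)
  then show ?thesis using assms by (simp add: phi_def powr_powr)
qed

lemma phi_mono:
  assumes "\<delta> > 0" "\<kappa> > 0" "0 \<le> w" "w \<le> v"
  shows "phi \<kappa> \<delta> w \<le> phi \<kappa> \<delta> v"
  using assms unfolding phi_def by (auto intro!: powr_mono2)

lemma phi_range:
  assumes "\<delta> > 0" "\<kappa> > 0" "0 \<le> w" "w \<le> 1"
  shows "0 \<le> phi \<kappa> \<delta> w" "phi \<kappa> \<delta> w \<le> \<delta>"
  using assms unfolding phi_def by (auto intro!: powr_le1)

lemma psi_phi:
  assumes "\<delta> > 0" "\<kappa> > 0" "0 \<le> w" "w \<le> 1"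
  shows "psi \<kappa> \<delta> (phi \<kappa> \<delta> w) = w"
proof -
  have "min (max (phi \<kappa> \<delta> w) 0) \<delta> = phi \<kappa> \<delta> w"
    using phi_range[OF assms] by simp
  then have "min (max (phi \<kappa> \<delta> w) 0) \<delta> / \<delta> = w powr (1/\<kappa>)"
    using assms by (simp add: phi_def)
  then show ?thesis using assms by (simp add: psi_alt powr_powr)
qed

lemma phi_0: "phi \<kappa> \<delta> 0 = 0" and phi_1: "phi \<kappa> \<delta> 1 = \<delta>"
  by (auto simp: phi_def)

lemma phi_cont:
  assumes "\<kappa> > 0"
  shows "continuous_on {0..} (phi \<kappa> \<delta>)"
  unfolding phi_def using assms by (intro continuous_intros continuous_on_powr') auto

lemma phi_deriv:
  assumes "w > 0"
  shows "(phi \<kappa> \<delta> has_real_derivative \<delta> * ((1/\<kappa>) * w powr (1/\<kappa> - 1))) (at w)"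
  unfolding phi_def using assms by (auto intro!: derivative_eq_intros)

lemma pow_mvt:
  fixes s t \<kappa> :: real
  assumes "0 \<le> s" "s < t" "\<kappa> > 0"
  shows "\<exists>z. s < z \<and> z < t \<and> t powr \<kappa> - s powr \<kappa> = (t - s) * (\<kappa> * z powr (\<kappa> - 1))"
proof -
  have c: "continuous_on {s..t} (\<lambda>z. z powr \<kappa>)"
    using assms by (intro continuous_on_powr' continuous_intros) auto
  have d: "\<And>z. s < z \<Longrightarrow> z < t \<Longrightarrow> ((\<lambda>z. z powr \<kappa>) has_real_derivative \<kappa> * z powr (\<kappa> - 1)) (at z)"
    using assms by (auto intro!: has_real_derivative_powr)
  from MVT[OF assms(2) c] d obtain l z where "s < z" "z < t" "DERIV (\<lambda>z. z powr \<kappa>) z :> l"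
     "t powr \<kappa> - s powr \<kappa> = (t - s) * l"
    by (metis real_differentiable_def)
  moreover have "l = \<kappa> * z powr (\<kappa> - 1)" using d[OF \<open>s<z\<close> \<open>z<t\<close>] calculation(3) DERIV_unique by blast
  ultimately show ?thesis by blast
qed

lemma pow_lb:
  fixes s t \<kappa> :: real
  assumes "0 \<le> s" "s \<le> t" "t \<le> 1" "\<kappa> > 0" "\<kappa> < 1"
  shows "\<kappa> * (t - s) \<le> t powr \<kappa> - s powr \<kappa>"
proof (cases "s = t")
  case False
  then have st: "s < t" using assms(2) by (simp add: order_less_le)
  then obtain z where z: "s < z" "z < t" "t powr \<kappa> - s powr \<kappa> = (t - s) * (\<kappa> * z powr (\<kappa> - 1))"
    using pow_mvt[OF assms(1) st assms(4)] by blast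
  have "1 \<le> z powr (\<kappa> - 1)"
    using z assms powr_mono2'[of "\<kappa> - 1" z 1] by auto
  then have "\<kappa> * (t - s) \<le> (t - s) * (\<kappa> * z powr (\<kappa> - 1))"
    using z assms by (simp add: mult_left_mono)
  then show ?thesis using z by simp
qed simp

lemma pow_ub:
  fixes s t \<kappa> :: real
  assumes "0 < s" "s \<le> t" "\<kappa> > 0" "\<kappa> < 1"
  shows "t powr \<kappa> - s powr \<kappa> \<le> \<kappa> * s powr (\<kappa> - 1) * (t - s)"
proof (cases "s = t")
  case False
  then have st: "s < t" using assms(2) by (simp add: order_less_le)
  then obtain z where z: "s < z" "z < t" "t powr \<kappa> - s powr \<kappa> = (t - s) * (\<kappa> * z powr (\<kappa> - 1))"
    using pow_mvt[OF _ st assms(3)] assms(1) by auto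
  have "z powr (\<kappa> - 1) \<le> s powr (\<kappa> - 1)"
    using z assms powr_mono2'[of "\<kappa> - 1" s z] by auto
  then have "(t - s) * (\<kappa> * z powr (\<kappa> - 1)) \<le> (t - s) * (\<kappa> * s powr (\<kappa> - 1))"
    using z assms by (intro mult_left_mono) auto
  then show ?thesis using z by simp
qed simp

lemma psi_lb:
  assumes "\<delta> > 0" "\<kappa> > 0" "\<kappa> < 1" "0 \<le> x" "x \<le> y" "y \<le> \<delta>"
  shows "\<kappa> * (y - x) / \<delta> \<le> psi \<kappa> \<delta> y - psi \<kappa> \<delta> x"
proof -
  have px: "psi \<kappa> \<delta> x = (x/\<delta>) powr \<kappa>" and py: "psi \<kappa> \<delta> y = (y/\<delta>) powr \<kappa>"
    using assms by (auto simp: psi_alt min_def max_def)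
  have "\<kappa> * (y/\<delta> - x/\<delta>) \<le> (y/\<delta>) powr \<kappa> - (x/\<delta>) powr \<kappa>"
    using assms by (intro pow_lb) (auto simp: divide_right_mono)
  moreover have "\<kappa> * (y/\<delta> - x/\<delta>) = \<kappa> * (y - x) / \<delta>" using assms by (simp add: field_simps)
  ultimately show ?thesis using px py by simp
qed

lemma psi_ub:
  assumes "\<delta> > 0" "\<kappa> > 0" "\<kappa> < 1" "0 < a" "a \<le> x" "x \<le> y"
  shows "psi \<kappa> \<delta> y - psi \<kappa> \<delta> x \<le> \<kappa> / \<delta> * (min a \<delta> / \<delta>) powr (\<kappa> - 1) * (y - x)"
proof (cases "x \<ge> \<delta>")
  case True
  then have "psi \<kappa> \<delta> y - psi \<kappa> \<delta> x = 0" using assms by (simp add: psi_one)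
  moreover have "0 \<le> \<kappa> / \<delta> * (min a \<delta> / \<delta>) powr (\<kappa> - 1) * (y - x)"
    using assms by simp
  ultimately show ?thesis by simp
next
  case False
  define y' where "y' = min y \<delta>"
  have mina: "min a \<delta> = a" using False assms by simp
  have px: "psi \<kappa> \<delta> x = (x/\<delta>) powr \<kappa>" and py: "psi \<kappa> \<delta> y = (y'/\<delta>) powr \<kappa>"
    using assms False by (auto simp: psi_alt min_def max_def y'_def)
  have xy': "x \<le> y'" "y' - x \<le> y - x" using False assms by (auto simp: y'_def)
  have "(y'/\<delta>) powr \<kappa> - (x/\<delta>) powr \<kappa> \<le> \<kappa> * (x/\<delta>) powr (\<kappa> - 1) * (y'/\<delta> - x/\<delta>)"
    using assms xy' by (intro pow_ub) (auto simp: divide_right_mono)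
  also have "\<dots> = \<kappa> / \<delta> * (x/\<delta>) powr (\<kappa> - 1) * (y' - x)"
    by (simp add: diff_divide_distrib field_simps)
  also have "\<dots> \<le> \<kappa> / \<delta> * (a/\<delta>) powr (\<kappa> - 1) * (y - x)"
  proof (intro mult_mono)
    show "(x/\<delta>) powr (\<kappa> - 1) \<le> (a/\<delta>) powr (\<kappa> - 1)"
      using assms by (intro powr_mono2') (auto simp: divide_right_mono)
  qed (use assms xy' in auto)
  finally show ?thesis using px py mina by simp
qed


lemmas hk_combine = Henstock_Kurzweil_Integration.integral_combine

lemma phi_pos: "\<delta> > 0 \<Longrightarrow> \<kappa> > 0 \<Longrightarrow> w > 0 \<Longrightarrow> phi \<kappa> \<delta> w > 0"
  by (simp add: phi_def)

lemma phi_lt: 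
  assumes "\<delta> > 0" "\<kappa> > 0" "0 \<le> w" "w < 1"
  shows "phi \<kappa> \<delta> w < \<delta>"
proof -
  have "w powr (1/\<kappa>) < 1 powr (1/\<kappa>)" using assms by (intro powr_less_mono2) auto
  then show ?thesis using assms by (simp add: phi_def)
qed

lemma cont_mult_int:
  fixes f :: "real \<Rightarrow> real"
  assumes "f integrable_on S"
  shows "integral S (\<lambda>x. f x * c) = integral S f * c"
  using integral_mult[OF assms, of c] by (simp add: mult.commute)

lemma LC:
  fixes g H H' :: "real \<Rightarrow> real"
  assumes d: "\<delta> > 0" and k: "\<kappa> > 0" and gc: "continuous_on UNIV g"
    and th: "0 \<le> th" "th + \<delta> \<le> \<tau>"
    and Hd: "\<And>w. 0 \<le> w \<Longrightarrow> w \<le> 1 \<Longrightarrow> (H has_real_derivative H' w) (at w)"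
    and H'c: "continuous_on {0..1} H'"
  shows "integral {0..\<tau>} (\<lambda>t. g t * H (psi \<kappa> \<delta> (t - th)))
       = H 1 * integral {0..\<tau>} g - integral {0..1} (\<lambda>w. integral {0..th + phi \<kappa> \<delta> w} g * H' w)"
proof -
  define G where "G x = integral {0..x} g" for x
  define f where "f t = g t * H (psi \<kappa> \<delta> (t - th))" for t
  define ph where "ph = phi \<kappa> \<delta>"
  define dph where "dph w = \<delta> * ((1/\<kappa>) * w powr (1/\<kappa> - 1))" for w
  have Hc: "continuous_on {0..1} H"
    by (rule DERIV_continuous_on[where D=H']) (use Hd in \<open>auto intro: has_field_derivative_at_within\<close>)
  have pc: "continuous_on UNIV (\<lambda>t. psi \<kappa> \<delta> (t - th))"
    by (rule continuous_on_compose2[OF psi_cont[OF d k]]) (auto intro!: continuous_intros)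
  have "continuous_on UNIV (\<lambda>t. H (psi \<kappa> \<delta> (t - th)))"
    by (rule continuous_on_compose2[OF Hc pc]) (use psi_nonneg psi_le1[OF d k] in auto)
  then have fc: "continuous_on UNIV f" unfolding f_def by (intro continuous_intros gc)
  have fi: "f integrable_on {a..b}" for a b
    by (rule integrable_continuous_real) (rule continuous_on_subset[OF fc], simp)
  have gi: "g integrable_on {a..b}" for a b
    by (rule integrable_continuous_real) (rule continuous_on_subset[OF gc], simp)
  have tau: "0 \<le> \<tau>" using th d by linarith
  have split1: "integral {0..\<tau>} f = integral {0..th} f + integral {th..th+\<delta>} f + integral {th+\<delta>..\<tau>} f"
  proof -
    have a: "integral {0..th} f + integral {th..\<tau>} f = integral {0..\<tau>} f"
      by (rule hk_combine) (use th d in \<open>auto intro: fi\<close>)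
    have b: "integral {th..th+\<delta>} f + integral {th+\<delta>..\<tau>} f = integral {th..\<tau>} f"
      by (rule hk_combine) (use th d in \<open>auto intro: fi\<close>)
    show ?thesis using a b by linarith
  qed
  have P1: "integral {0..th} f = G th * H 0"
  proof -
    have "integral {0..th} f = integral {0..th} (\<lambda>t. g t * H 0)"
      by (rule integral_cong) (auto simp: f_def psi_zero[OF _ d])
    then show ?thesis by (simp add: cont_mult_int[OF gi] G_def)
  qed
  have P3: "integral {th+\<delta>..\<tau>} f = (G \<tau> - G (th + \<delta>)) * H 1"
  proof -
    have "integral {th+\<delta>..\<tau>} f = integral {th+\<delta>..\<tau>} (\<lambda>t. g t * H 1)"
      by (rule integral_cong) (auto simp: f_def psi_one)
    moreover have "G (th+\<delta>) + integral {th+\<delta>..\<tau>} g = G \<tau>"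
      unfolding G_def using th d by (intro hk_combine gi) auto
    then have "integral {th+\<delta>..\<tau>} g = G \<tau> - G (th + \<delta>)" by simp
    moreover have "integral {th+\<delta>..\<tau>} (\<lambda>t. g t * H 1) = integral {th+\<delta>..\<tau>} g * H 1"
      by (rule cont_mult_int[OF gi])
    ultimately show ?thesis by simp
  qed
  have phd: "((\<lambda>w. th + ph w) has_real_derivative dph w) (at w)" if "w > 0" for w
    using DERIV_add[OF DERIV_const[of th] phi_deriv[OF that, of \<kappa> \<delta>]] by (simp add: ph_def dph_def)
  have phc: "continuous_on {0..1} ph" unfolding ph_def
    by (rule continuous_on_subset[OF phi_cont[OF k]]) auto
  have sub: "((\<lambda>w. dph w *\<^sub>R f (th + ph w)) has_integral integral {th + ph 0..th + ph 1} f) {0..1}"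
  proof (rule has_integral_substitution_strong[where s="{0}" and c=th and d="th+\<delta>"])
    show "th + ph 0 \<le> th + ph 1" using d by (simp add: ph_def phi_0 phi_1)
    show "(\<lambda>w. th + ph w) ` {0..1} \<subseteq> {th..th + \<delta>}"
      using phi_range[OF d k] by (auto simp: ph_def)
    show "continuous_on {th..th + \<delta>} f" by (rule continuous_on_subset[OF fc]) simp
    show "continuous_on {0..1} (\<lambda>w. th + ph w)" by (intro continuous_intros phc)
    show "((\<lambda>w. th + ph w) has_real_derivative dph x) (at x within {0..1})" if "x \<in> {0..1} - {0}" for x
      using phd[of x] that by (auto intro: has_field_derivative_at_within)
  qed auto
  have sub2: "((\<lambda>w. g (th + ph w) * dph w * H w) has_integral integral {th..th+\<delta>} f) {0..1}"
  proof -
    have eq: "\<And>w. w \<in> {0..1} \<Longrightarrow> dph w *\<^sub>R f (th + ph w) = g (th + ph w) * dph w * H w"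
      using psi_phi[OF d k] by (auto simp: f_def ph_def)
    have "((\<lambda>w. dph w *\<^sub>R f (th + ph w)) has_integral integral {th..th+\<delta>} f) {0..1}"
      using sub by (simp add: ph_def phi_0 phi_1)
    then show ?thesis by (rule has_integral_eq[rotated]) (rule eq)
  qed
  have Gd: "(G has_real_derivative g x) (at x)" if "0 < x" "x < \<tau>" for x
  proof -
    have "(G has_real_derivative g x) (at x within {0..\<tau>})"
      unfolding G_def using that by (intro integral_has_real_derivative continuous_on_subset[OF gc]) auto
    then show ?thesis using that by (simp add: at_within_Icc_at)
  qed
  have Gc: "continuous_on {0..\<tau>} G"
    unfolding G_def
    by (rule DERIV_continuous_on[where D=g], rule integral_has_real_derivative)
       (auto intro: continuous_on_subset[OF gc])
  have GPc: "continuous_on {0..1} (\<lambda>w. G (th + ph w))"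
  proof (rule continuous_on_compose2[OF Gc])
    show "continuous_on {0..1} (\<lambda>w. th + ph w)" by (intro continuous_intros phc)
    have "th + ph w \<in> {0..\<tau>}" if "w \<in> {0..1}" for w :: real
      using phi_range[OF d k, of w] th that unfolding ph_def by auto
    then show "(\<lambda>w. th + ph w) ` {0..1} \<subseteq> {0..\<tau>}" by auto
  qed
  define R where "R w = G (th + ph w) * H w" for w
  have ftc: "((\<lambda>w. g (th + ph w) * dph w * H w + G (th + ph w) * H' w) has_integral (R 1 - R 0)) {0..1}"
  proof (rule fundamental_theorem_of_calculus_interior_strong[where S="{}"])
    show "continuous_on {0..1} R" unfolding R_def by (intro continuous_intros GPc Hc)
    fix w :: real assume w: "w \<in> {0<..<1} - {}"
    have x: "0 < th + ph w" "th + ph w < \<tau>"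
      using phi_pos[OF d k, of w] phi_lt[OF d k, of w] w th by (auto simp: ph_def)
    have "(R has_real_derivative (g (th + ph w) * dph w) * H w + G (th + ph w) * H' w) (at w)"
    proof -
      have d1: "((\<lambda>w. G (th + ph w)) has_real_derivative g (th + ph w) * dph w) (at w)"
        by (rule DERIV_chain2[OF Gd[OF x] phd]) (use w in auto)
      have d2: "(H has_real_derivative H' w) (at w)" using Hd w by auto
      show ?thesis unfolding R_def
        by (rule DERIV_cong[OF DERIV_mult[OF d1 d2]]) (simp add: algebra_simps)
    qed
    then show "(R has_vector_derivative g (th + ph w) * dph w * H w + G (th + ph w) * H' w) (at w)"
      by (simp add: has_real_derivative_iff_has_vector_derivative)
  qed auto
  have Ii: "(\<lambda>w. G (th + ph w) * H' w) integrable_on {0..1}"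
    by (intro integrable_continuous_real continuous_intros GPc H'c)
  have "((\<lambda>w. g (th + ph w) * dph w * H w) has_integral (R 1 - R 0 - integral {0..1} (\<lambda>w. G (th + ph w) * H' w))) {0..1}"
    using has_integral_diff[OF ftc integrable_integral[OF Ii]] by simp
  then have mid: "integral {th..th+\<delta>} f = R 1 - R 0 - integral {0..1} (\<lambda>w. G (th + ph w) * H' w)"
    using sub2 has_integral_unique by blast
  have R01: "R 1 = G (th + \<delta>) * H 1" "R 0 = G th * H 0"
    by (auto simp: R_def ph_def phi_0 phi_1)
  show ?thesis
    using split1 P1 P3 mid R01 unfolding f_def[symmetric] G_def[symmetric] ph_def[symmetric]
    by (simp add: algebra_simps)
qed


lemma E_deriv:
  fixes g H' :: "real \<Rightarrow> real" and U :: "real set"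
  assumes d: "\<delta> > 0" and k: "\<kappa> > 0" and gc: "continuous_on UNIV g"
    and H'c: "continuous_on {0..1} H'"
    and U: "open U" "convex U" "x0 \<in> U"
    and rng: "\<And>x t. x \<in> U \<Longrightarrow> t \<in> {0..1} \<Longrightarrow> 0 < x + phi \<kappa> \<delta> t \<and> x + phi \<kappa> \<delta> t < \<tau>"
  shows "((\<lambda>x. integral {0..1} (\<lambda>t. integral {0..x + phi \<kappa> \<delta> t} g * H' t)) has_real_derivative
           integral {0..1} (\<lambda>t. g (x0 + phi \<kappa> \<delta> t) * H' t)) (at x0)"
proof -
  define G where "G x = integral {0..x} g" for x
  have Gd: "(G has_real_derivative g x) (at x)" if "0 < x" "x < \<tau>" for x
  proof -
    have "(G has_real_derivative g x) (at x within {0..\<tau>})"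
      unfolding G_def using that by (intro integral_has_real_derivative continuous_on_subset[OF gc]) auto
    then show ?thesis using that by (simp add: at_within_Icc_at)
  qed
  have Gc: "continuous_on {0..\<tau>} G"
    unfolding G_def
    by (rule DERIV_continuous_on[where D=g], rule integral_has_real_derivative)
       (auto intro: continuous_on_subset[OF gc])
  have phc: "continuous_on {0..1} (phi \<kappa> \<delta>)"
    by (rule continuous_on_subset[OF phi_cont[OF k]]) auto
  have "((\<lambda>x. integral (cbox 0 1) (\<lambda>t. G (x + phi \<kappa> \<delta> t) * H' t)) has_field_derivative
           integral (cbox 0 1) (\<lambda>t. g (x0 + phi \<kappa> \<delta> t) * H' t)) (at x0 within U)"
  proof (rule leibniz_rule_field_derivative[where fx="\<lambda>x t. g (x + phi \<kappa> \<delta> t) * H' t"])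
    fix x t assume xt: "x \<in> U" "t \<in> cbox (0::real) 1"
    have r: "0 < x + phi \<kappa> \<delta> t" "x + phi \<kappa> \<delta> t < \<tau>" using rng[of x t] xt by auto
    have "((\<lambda>x. x + phi \<kappa> \<delta> t) has_real_derivative 1) (at x)"
      by (auto intro!: derivative_eq_intros)
    from DERIV_chain2[OF Gd[OF r] this]
    have "((\<lambda>x. G (x + phi \<kappa> \<delta> t)) has_real_derivative g (x + phi \<kappa> \<delta> t)) (at x)" by simp
    from DERIV_cmult_right[OF this, of "H' t"]
    show "((\<lambda>x. G (x + phi \<kappa> \<delta> t) * H' t) has_real_derivative g (x + phi \<kappa> \<delta> t) * H' t) (at x within U)"
      by (auto intro: has_field_derivative_at_within)
  next
    fix x assume x: "x \<in> U"
    have "continuous_on {0..1} (\<lambda>t. G (x + phi \<kappa> \<delta> t))"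
    proof (rule continuous_on_compose2[OF Gc])
      show "continuous_on {0..1} (\<lambda>t. x + phi \<kappa> \<delta> t)" by (intro continuous_intros phc)
      show "(\<lambda>t. x + phi \<kappa> \<delta> t) ` {0..1} \<subseteq> {0..\<tau>}" using rng[OF x] by force
    qed
    then show "(\<lambda>t. G (x + phi \<kappa> \<delta> t) * H' t) integrable_on cbox 0 1"
      by (auto intro!: integrable_continuous_real continuous_intros H'c)
  next
    have c1: "continuous_on (U \<times> {0..1}) (\<lambda>p. fst p + phi \<kappa> \<delta> (snd p))"
      by (intro continuous_intros continuous_on_compose2[OF phc continuous_on_snd]) auto
    have c2: "continuous_on (U \<times> {0..1}) (\<lambda>p. g (fst p + phi \<kappa> \<delta> (snd p)))"
      by (rule continuous_on_compose2[OF gc c1]) auto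
    have c3: "continuous_on (U \<times> {0..1}) (\<lambda>p. H' (snd p))"
      by (rule continuous_on_compose2[OF H'c continuous_on_snd]) auto
    have "continuous_on (U \<times> {0..1}) (\<lambda>p. g (fst p + phi \<kappa> \<delta> (snd p)) * H' (snd p))"
      by (intro continuous_intros c2 c3)
    then show "continuous_on (U \<times> cbox 0 1) (\<lambda>(x, t). g (x + phi \<kappa> \<delta> t) * H' t)"
      by (simp add: case_prod_beta')
  qed (use U in auto)
  then show ?thesis by (simp only: G_def at_within_open[OF U(3) U(1)] cbox_interval)
qed

locale KL =
  fixes S lam0 \<kappa> \<delta> \<tau> h th0 \<alpha> \<beta> :: real
  assumes S: "S > 0" and l0: "lam0 > 0" and k: "0 < \<kappa>" and k2: "\<kappa> < 1/2" and d: "\<delta> > 0"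
    and ab: "\<alpha> < \<beta>" "0 \<le> \<alpha> - \<delta>" "\<beta> + \<delta> \<le> \<tau> - \<delta>"
    and th0: "\<alpha> < th0" "th0 < \<beta>"
    and hc: "h > S / ln (1 + S/lam0) - S - lam0"
begin

definition "L = ln (1 + S/lam0)"
definition "kk w = S / (S * w + lam0)"
definition "ls t = lam_star S h lam0 \<kappa> \<delta> th0 t"
definition "U = {\<alpha> - \<delta><..<\<beta> + \<delta>}"
definition "D th = - S + integral {0..1} (\<lambda>w. ls (th + phi \<kappa> \<delta> w) * kk w)"
definition "F c = integral {0..1} (\<lambda>w. psi \<kappa> \<delta> (c + phi \<kappa> \<delta> w) * kk w)"

lemma L_pos: "0 < L" and L_lt: "L < S / lam0"
  using S l0 ln_add_one_self_less_self[of "S/lam0"] by (auto simp: L_def intro!: ln_gt_zero)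

lemma Sh: "S + h > 0"
proof -
  have "lam0 * L < S" using L_lt l0 by (simp add: field_simps)
  then have "lam0 < S / L" using L_pos by (simp add: field_simps)
  then show ?thesis using hc unfolding L_def by linarith
qed

lemma kk_pos: "0 \<le> w \<Longrightarrow> 0 < kk w"
  using S l0 by (simp add: kk_def add_nonneg_pos)

lemma kk_le: "0 \<le> w \<Longrightarrow> kk w \<le> S / lam0"
  using S l0 by (simp add: kk_def frac_le)

lemma kk_ge: "w \<le> 1 \<Longrightarrow> 0 \<le> w \<Longrightarrow> S / (S + lam0) \<le> kk w"
proof -
  assume w: "w \<le> 1" "0 \<le> w"
  have a: "0 \<le> S * w" "S * w \<le> S" using w S by (auto simp: mult_left_le)
  then have "0 < S * w + lam0" using l0 by linarith
  then show ?thesis unfolding kk_def using S l0 a by (intro divide_left_mono) auto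
qed

lemma Swpos: "0 \<le> w \<Longrightarrow> 0 < S * w + lam0"
  using S l0 by (simp add: add_nonneg_pos)

lemma kk_cont: "continuous_on {0..1} kk"
  unfolding kk_def using Swpos
  by (intro continuous_intros) (auto simp: less_imp_neq[symmetric])

lemma kk_deriv: "0 \<le> w \<Longrightarrow> ((\<lambda>w. ln (S * w + lam0)) has_real_derivative kk w) (at w)"
  unfolding kk_def using Swpos[of w]
  by (auto intro!: derivative_eq_intros)

lemma kk_int: "(kk has_integral L) {0..1}"
proof -
  have "(kk has_integral (ln (S * 1 + lam0) - ln (S * 0 + lam0))) {0..1}"
  proof (rule fundamental_theorem_of_calculus_interior_strong[where S="{}"])
    show "continuous_on {0..1} (\<lambda>w. ln (S * w + lam0))"
      using Swpos by (intro continuous_intros) (auto simp: less_imp_neq[symmetric])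
    fix w :: real assume "w \<in> {0<..<1} - {}"
    then show "((\<lambda>w. ln (S * w + lam0)) has_vector_derivative kk w) (at w)"
      using kk_deriv[of w] by (simp add: has_real_derivative_iff_has_vector_derivative)
  qed auto
  moreover have "ln (S * 1 + lam0) - ln (S * 0 + lam0) = L"
  proof -
    have "ln ((S + lam0) / lam0) = ln (S + lam0) - ln lam0" using S l0 by (simp add: ln_div)
    moreover have "(S + lam0) / lam0 = 1 + S / lam0" using l0 by (simp add: field_simps)
    ultimately show ?thesis by (simp add: L_def)
  qed
  ultimately show ?thesis by simp
qed

lemma ls_cont: "continuous_on A ls"
proof -
  have "continuous_on A (\<lambda>t. psi \<kappa> \<delta> (t - th0))"
    by (rule continuous_on_compose2[OF psi_cont[OF d k, of UNIV]]) (auto intro!: continuous_intros)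
  then show ?thesis unfolding ls_def lam_star_def by (intro continuous_intros)
qed

lemma ls_pos: "0 < ls t"
  using Sh l0 psi_nonneg[of \<kappa> \<delta> "t - th0"] unfolding ls_def lam_star_def
  by (simp add: add_nonneg_pos)

end


context KL begin

abbreviation "lm th t \<equiv> lam S lam0 \<kappa> \<delta> th t"

lemma lm_pos: "0 < lm th t"
  using S l0 psi_nonneg[of \<kappa> \<delta> "t - th"] unfolding lam_def
  by (simp add: add_nonneg_pos)

lemma lm_cont: "continuous_on A (lm th)"
proof -
  have "continuous_on A (\<lambda>t. psi \<kappa> \<delta> (t - th))"
    by (rule continuous_on_compose2[OF psi_cont[OF d k, of UNIV]]) (auto intro!: continuous_intros)
  then show ?thesis unfolding lam_def by (intro continuous_intros)
qed

lemma U_props: "open U" "convex U"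
  by (auto simp: U_def)

lemma U_rng: "th \<in> U \<Longrightarrow> 0 < th \<and> th + \<delta> < \<tau>"
  using ab by (auto simp: U_def)

lemma U_rng2: "th \<in> U \<Longrightarrow> t \<in> {0..1} \<Longrightarrow> 0 < th + phi \<kappa> \<delta> t \<and> th + phi \<kappa> \<delta> t < \<tau>"
  using U_rng[of th] phi_range[OF d k, of t] by auto

lemma U_rng2a: "th \<in> U \<Longrightarrow> 0 \<le> t \<Longrightarrow> t \<le> 1 \<Longrightarrow> 0 < th + phi \<kappa> \<delta> t"
  using U_rng2 by auto
lemma U_rng2b: "th \<in> U \<Longrightarrow> 0 \<le> t \<Longrightarrow> t \<le> 1 \<Longrightarrow> th + phi \<kappa> \<delta> t < \<tau>"
  using U_rng2 by auto

definition "E1 th = integral {0..1} (\<lambda>w. integral {0..th + phi \<kappa> \<delta> w} (\<lambda>_. 1::real) * S)"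
definition "E2 th = integral {0..1} (\<lambda>w. integral {0..th + phi \<kappa> \<delta> w} ls * kk w)"
definition "K0 = (S * 1 + lam0) * integral {0..\<tau>} (\<lambda>_. 1::real) - integral {0..\<tau>} ls
     - ln (S * 1 + lam0) * integral {0..\<tau>} ls + integral {0..\<tau>} (\<lambda>t. ls t * ln (ls t))"

lemma J_eq0:
  assumes th: "th \<in> U"
  shows "JKL S lam0 \<kappa> \<delta> \<tau> th0 h th
     = integral {0..\<tau>} (\<lambda>t. lm th t - ls t - ls t * ln (lm th t) + ls t * ln (ls t))"
proof -
  define e where "e t = lm th t - ls t - ls t * ln (lm th t) + ls t * ln (ls t)" for t
  have ec: "continuous_on UNIV e"
    unfolding e_def using lm_pos ls_pos
    by (intro continuous_intros lm_cont ls_cont) (auto simp: less_imp_neq[symmetric])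
  have ei: "e integrable_on {a..b}" for a b
    by (rule integrable_continuous_real) (rule continuous_on_subset[OF ec], simp)
  have eq: "(lm th t / ls t - 1 - ln (lm th t / ls t)) * ls t = e t" for t
  proof -
    have hh: "ln (lm th t / ls t) = ln (lm th t) - ln (ls t)"
      by (subst ln_div) (use lm_pos[of th t] ls_pos[of t] in auto)
    have "ls t \<noteq> 0" using ls_pos[of t] by simp
    then show ?thesis unfolding e_def hh by (simp add: field_simps)
  qed
  define m where "m = min th th0"
  have m: "0 \<le> m" "m \<le> \<tau>" using U_rng[OF th] th0 ab d unfolding m_def by auto
  have "JKL S lam0 \<kappa> \<delta> \<tau> th0 h th = integral {m..\<tau>} e"
    unfolding JKL_def m_def ls_def[symmetric] using eq by simp
  moreover have "integral {0..m} e = 0"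
  proof -
    have "integral {0..m} e = integral {0..m} (\<lambda>_. 0::real)"
    proof (rule integral_cong)
      fix t assume t: "t \<in> {0..m}"
      then have "psi \<kappa> \<delta> (t - th) = 0" "psi \<kappa> \<delta> (t - th0) = 0"
        using d by (auto simp: m_def intro!: psi_zero)
      then show "e t = 0" by (simp add: e_def lam_def ls_def lam_star_def)
    qed
    then show ?thesis by simp
  qed
  moreover have "integral {0..m} e + integral {m..\<tau>} e = integral {0..\<tau>} e"
    using m by (intro hk_combine ei) auto
  ultimately show ?thesis unfolding e_def by simp
qed

lemma J_repr:
  assumes th: "th \<in> U"
  shows "JKL S lam0 \<kappa> \<delta> \<tau> th0 h th = K0 - E1 th + E2 th"
proof -
  have r: "0 \<le> th" "th + \<delta> \<le> \<tau>" using U_rng[OF th] by auto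
  have i: "f integrable_on {0..\<tau>}" if "continuous_on UNIV f" for f :: "real \<Rightarrow> real"
    by (rule integrable_continuous_real) (rule continuous_on_subset[OF that], simp)
  have c1: "continuous_on UNIV (lm th)" by (rule lm_cont)
  have c2: "continuous_on UNIV (\<lambda>t. ls t * ln (lm th t))"
    using lm_pos by (intro continuous_intros lm_cont ls_cont) (auto simp: less_imp_neq[symmetric])
  have c3: "continuous_on UNIV (\<lambda>t. ls t * ln (ls t))"
    using ls_pos by (intro continuous_intros ls_cont) (auto simp: less_imp_neq[symmetric])
  have split: "integral {0..\<tau>} (\<lambda>t. lm th t - ls t - ls t * ln (lm th t) + ls t * ln (ls t))
     = integral {0..\<tau>} (lm th) - integral {0..\<tau>} ls - integral {0..\<tau>} (\<lambda>t. ls t * ln (lm th t))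
       + integral {0..\<tau>} (\<lambda>t. ls t * ln (ls t))"
    using i[OF c1] i[OF ls_cont] i[OF c2] i[OF c3]
    by (simp add: integral_add integral_diff integrable_diff)
  have I1: "integral {0..\<tau>} (lm th) = (S * 1 + lam0) * integral {0..\<tau>} (\<lambda>_. 1::real) - E1 th"
  proof -
    have "integral {0..\<tau>} (\<lambda>t. 1 * (S * psi \<kappa> \<delta> (t - th) + lam0))
       = (S * 1 + lam0) * integral {0..\<tau>} (\<lambda>_. 1::real)
         - integral {0..1} (\<lambda>w. integral {0..th + phi \<kappa> \<delta> w} (\<lambda>_. 1::real) * S)"
      by (rule LC[OF d k _ r, where H="\<lambda>w. S * w + lam0" and H'="\<lambda>_. S"])
         (auto intro!: derivative_eq_intros continuous_intros)
    then show ?thesis by (simp add: lam_def E1_def)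
  qed
  have I3: "integral {0..\<tau>} (\<lambda>t. ls t * ln (lm th t)) = ln (S * 1 + lam0) * integral {0..\<tau>} ls - E2 th"
  proof -
    have "integral {0..\<tau>} (\<lambda>t. ls t * ln (S * psi \<kappa> \<delta> (t - th) + lam0))
       = ln (S * 1 + lam0) * integral {0..\<tau>} ls
         - integral {0..1} (\<lambda>w. integral {0..th + phi \<kappa> \<delta> w} ls * kk w)"
      by (rule LC[OF d k ls_cont r, where H="\<lambda>w. ln (S * w + lam0)" and H'=kk])
         (auto intro: kk_deriv kk_cont)
    then show ?thesis by (simp add: lam_def E2_def)
  qed
  show ?thesis using J_eq0[OF th] split I1 I3 unfolding K0_def by simp
qed

lemma J_deriv:
  assumes th: "th \<in> U"
  shows "(JKL S lam0 \<kappa> \<delta> \<tau> th0 h has_real_derivative D th) (at th)"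
proof -
  have d1: "(E1 has_real_derivative integral {0..1} (\<lambda>t::real. 1 * S)) (at th)"
  proof -
    have "((\<lambda>x. integral {0..1} (\<lambda>t. integral {0..x + phi \<kappa> \<delta> t} (\<lambda>_. 1::real) * (\<lambda>_. S) t))
      has_real_derivative integral {0..1} (\<lambda>t. (\<lambda>_. 1::real) (th + phi \<kappa> \<delta> t) * (\<lambda>_. S) t)) (at th)"
      by (rule E_deriv[OF d k, where \<tau>=\<tau>]) (auto intro!: continuous_intros U_rng2a U_rng2b U_props th)
    then show ?thesis unfolding E1_def by assumption
  qed
  have d2: "(E2 has_real_derivative integral {0..1} (\<lambda>t. ls (th + phi \<kappa> \<delta> t) * kk t)) (at th)"
    unfolding E2_def
    by (rule E_deriv[OF d k ls_cont kk_cont U_props th, where \<tau>=\<tau>]) (auto intro!: U_rng2a U_rng2b)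
  have "((\<lambda>x. K0 - E1 x + E2 x) has_real_derivative (0 - integral {0..1} (\<lambda>t::real. 1 * S) + integral {0..1} (\<lambda>t. ls (th + phi \<kappa> \<delta> t) * kk t))) (at th)"
    by (intro DERIV_add DERIV_diff DERIV_const d1 d2)
  then have "((\<lambda>x. K0 - E1 x + E2 x) has_real_derivative D th) (at th)"
    by (simp add: D_def)
  then show ?thesis
    by (rule has_field_derivative_transform_within_open[OF _ U_props(1) th]) (simp add: J_repr)
qed

end


lemma int_lin:
  fixes f g :: "real \<Rightarrow> real"
  assumes "f integrable_on A" "g integrable_on A"
  shows "integral A (\<lambda>x. a * f x + b * g x) = a * integral A f + b * integral A g"
proof -
  have i: "(\<lambda>x. a * f x) integrable_on A" "(\<lambda>x. b * g x) integrable_on A"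
    using integrable_on_cmult_left[OF assms(1), of a] integrable_on_cmult_left[OF assms(2), of b] by auto
  have "integral A (\<lambda>x. a * f x + b * g x) = integral A (\<lambda>x. a * f x) + integral A (\<lambda>x. b * g x)"
    by (rule integral_add[OF i])
  also have "integral A (\<lambda>x. a * f x) = a * integral A f" by (rule integral_mult[OF assms(1), symmetric])
  also have "integral A (\<lambda>x. b * g x) = b * integral A g" by (rule integral_mult[OF assms(2), symmetric])
  finally show ?thesis .
qed

context KL begin

lemma pk_cont: "continuous_on {0..1} (\<lambda>w. psi \<kappa> \<delta> (c + phi \<kappa> \<delta> w) * kk w)"
proof -
  have phc: "continuous_on {0..1} (phi \<kappa> \<delta>)"
    by (rule continuous_on_subset[OF phi_cont[OF k]]) auto
  have "continuous_on {0..1} (\<lambda>w. psi \<kappa> \<delta> (c + phi \<kappa> \<delta> w))"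
    by (rule continuous_on_compose2[OF psi_cont[OF d k, of UNIV]]) (auto intro!: continuous_intros phc)
  then show ?thesis by (intro continuous_intros kk_cont)
qed

lemma pk_int: "(\<lambda>w. psi \<kappa> \<delta> (c + phi \<kappa> \<delta> w) * kk w) integrable_on {0..1}"
  by (rule integrable_continuous_real[OF pk_cont])

lemma kk_inte: "kk integrable_on {0..1}"
  using kk_int by blast

lemma integral_kk: "integral {0..1} kk = L"
  using kk_int by blast

lemma D_F: "D th = - S + lam0 * L + (S + h) * F (th - th0)"
proof -
  have "integral {0..1} (\<lambda>w. ls (th + phi \<kappa> \<delta> w) * kk w)
      = integral {0..1} (\<lambda>w. (S + h) * (psi \<kappa> \<delta> ((th - th0) + phi \<kappa> \<delta> w) * kk w) + lam0 * kk w)"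
  proof (rule integral_cong)
    fix w :: real
    have "th + phi \<kappa> \<delta> w - th0 = (th - th0) + phi \<kappa> \<delta> w" by simp
    then show "ls (th + phi \<kappa> \<delta> w) * kk w = (S + h) * (psi \<kappa> \<delta> ((th - th0) + phi \<kappa> \<delta> w) * kk w) + lam0 * kk w"
      unfolding ls_def lam_star_def by (simp add: algebra_simps)
  qed
  also have "\<dots> = (S + h) * F (th - th0) + lam0 * L"
    using int_lin[OF pk_int[of "th - th0"] kk_inte] by (simp add: F_def integral_kk)
  finally show ?thesis unfolding D_def by simp
qed

lemma F_mono:
  assumes "c \<le> c'"
  shows "F c \<le> F c'"
  unfolding F_def
proof (rule integral_le[OF pk_int pk_int])
  fix w :: real assume "w \<in> {0..1}"
  then show "psi \<kappa> \<delta> (c + phi \<kappa> \<delta> w) * kk w \<le> psi \<kappa> \<delta> (c' + phi \<kappa> \<delta> w) * kk w"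
    using assms kk_pos[of w] by (intro mult_right_mono psi_mono[OF d k]) auto
qed

lemma F_nonneg: "0 \<le> F c"
  unfolding F_def
proof (rule integral_nonneg[OF pk_int])
  fix w :: real assume "w \<in> {0..1}"
  then have "0 < kk w" using kk_pos by auto
  then show "0 \<le> psi \<kappa> \<delta> (c + phi \<kappa> \<delta> w) * kk w" using psi_nonneg by simp
qed

lemma F_le_L: "F c \<le> L"
proof -
  have "F c \<le> integral {0..1} kk"
    unfolding F_def
  proof (rule integral_le[OF pk_int kk_inte])
    fix w :: real assume "w \<in> {0..1}"
    then show "psi \<kappa> \<delta> (c + phi \<kappa> \<delta> w) * kk w \<le> kk w"
    proof -
      have "0 < kk w" using kk_pos \<open>w \<in> {0..1}\<close> by auto
      then show ?thesis using psi_le1[OF d k] psi_nonneg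
        by (simp add: mult_left_le_one_le mult.commute)
    qed
  qed
  then show ?thesis using integral_kk by simp
qed

lemma F_low: "c \<le> - \<delta> \<Longrightarrow> F c = 0"
proof -
  assume c: "c \<le> - \<delta>"
  have "F c = integral {0..1} (\<lambda>_::real. 0::real)"
    unfolding F_def
  proof (rule integral_cong)
    fix w :: real assume "w \<in> {0..1}"
    then have "c + phi \<kappa> \<delta> w \<le> 0" using phi_range[OF d k, of w] c by auto
    then show "psi \<kappa> \<delta> (c + phi \<kappa> \<delta> w) * kk w = 0" using psi_zero[OF _ d] by simp
  qed
  then show ?thesis by simp
qed

lemma F_high: "c \<ge> \<delta> \<Longrightarrow> F c = L"
proof -
  assume c: "c \<ge> \<delta>"
  have "F c = integral {0..1} kk"
    unfolding F_def
  proof (rule integral_cong)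
    fix w :: real assume "w \<in> {0..1}"
    then have "c + phi \<kappa> \<delta> w \<ge> \<delta>" using phi_range[OF d k, of w] c by auto
    then show "psi \<kappa> \<delta> (c + phi \<kappa> \<delta> w) * kk w = kk w" using psi_one by simp
  qed
  then show ?thesis using integral_kk by simp
qed

lemma F_0: "S * F 0 + lam0 * L = S"
proof -
  have "S * F 0 + lam0 * L = integral {0..1} (\<lambda>w. S * (psi \<kappa> \<delta> (0 + phi \<kappa> \<delta> w) * kk w) + lam0 * kk w)"
    using int_lin[OF pk_int[of 0] kk_inte] by (simp add: F_def integral_kk)
  also have "\<dots> = integral {0..1} (\<lambda>_::real. S)"
  proof (rule integral_cong)
    fix w :: real assume w: "w \<in> {0..1}"
    then have "psi \<kappa> \<delta> (0 + phi \<kappa> \<delta> w) = w" using psi_phi[OF d k] by auto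
    moreover have "S * w + lam0 \<noteq> 0" using Swpos[of w] w by auto
    moreover have "(S * w + lam0) * kk w = S" using \<open>S * w + lam0 \<noteq> 0\<close> by (simp add: kk_def)
    moreover have "S * (w * kk w) + lam0 * kk w = (S * w + lam0) * kk w" by (simp add: algebra_simps)
    ultimately show "S * (psi \<kappa> \<delta> (0 + phi \<kappa> \<delta> w) * kk w) + lam0 * kk w = S"
      by simp
  qed
  finally show ?thesis by simp
qed

end


context KL begin

lemma diff_int: "(\<lambda>w. psi \<kappa> \<delta> (c' + phi \<kappa> \<delta> w) * kk w - psi \<kappa> \<delta> (c + phi \<kappa> \<delta> w) * kk w) integrable_on {a..b}"
  if "0 \<le> a" "b \<le> 1"
  using that by (intro integrable_continuous_real continuous_intros continuous_on_subset[OF pk_cont]) auto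

lemma F_diff: "F c' - F c = integral {0..1} (\<lambda>w. psi \<kappa> \<delta> (c' + phi \<kappa> \<delta> w) * kk w - psi \<kappa> \<delta> (c + phi \<kappa> \<delta> w) * kk w)"
  unfolding F_def by (rule integral_diff[OF pk_int pk_int, symmetric])

lemma psi_gap:
  assumes "- \<delta> < c" "c < c'" "c' < \<delta>" "c' - c < \<delta>"
  shows "psi \<kappa> \<delta> (- c) < psi \<kappa> \<delta> (\<delta> - c')"
  using assms d by (intro psi_strict[OF d k]) auto

lemma F_LG:
  assumes "- \<delta> < c" "c < c'" "c' < \<delta>" "c' - c < \<delta>"
  shows "S / (S + lam0) * (\<kappa> * (c' - c) / \<delta>) * (psi \<kappa> \<delta> (\<delta> - c') - psi \<kappa> \<delta> (- c)) \<le> F c' - F c"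
proof -
  define q where "q w = psi \<kappa> \<delta> (c' + phi \<kappa> \<delta> w) * kk w - psi \<kappa> \<delta> (c + phi \<kappa> \<delta> w) * kk w" for w
  define a1 where "a1 = psi \<kappa> \<delta> (- c)"
  define b1 where "b1 = psi \<kappa> \<delta> (\<delta> - c')"
  define A where "A = S / (S + lam0) * (\<kappa> * (c' - c) / \<delta>)"
  have ab1: "0 \<le> a1" "a1 < b1" "b1 \<le> 1"
    using psi_gap[OF assms] psi_nonneg psi_le1[OF d k] unfolding a1_def b1_def by auto
  have qi: "q integrable_on {a..b}" if "0 \<le> a" "b \<le> 1" for a b
    unfolding q_def using diff_int that by blast
  have qnn: "0 \<le> q w" if "w \<in> {0..1}" for w
  proof -
    have "psi \<kappa> \<delta> (c + phi \<kappa> \<delta> w) \<le> psi \<kappa> \<delta> (c' + phi \<kappa> \<delta> w)"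
      using assms by (intro psi_mono[OF d k]) auto
    moreover have "0 < kk w" using kk_pos that by auto
    ultimately show ?thesis unfolding q_def by (simp add: algebra_simps)
  qed
  have qA: "A \<le> q w" if w: "w \<in> {a1..b1}" for w
  proof -
    have w01: "0 \<le> w" "w \<le> 1" using w ab1 by auto
    have lo: "- c \<le> phi \<kappa> \<delta> w"
    proof (cases "c \<ge> 0")
      case True then show ?thesis using phi_range[OF d k w01] by linarith
    next
      case False
      then have "phi \<kappa> \<delta> a1 \<le> phi \<kappa> \<delta> w" using w ab1 by (intro phi_mono[OF d k]) auto
      moreover have "phi \<kappa> \<delta> a1 = - c" unfolding a1_def using False assms by (intro phi_psi[OF d k]) auto
      ultimately show ?thesis by simp
    qed
    have hi: "phi \<kappa> \<delta> w \<le> \<delta> - c'"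
    proof (cases "c' \<le> 0")
      case True then show ?thesis using phi_range[OF d k w01] by linarith
    next
      case False
      then have "phi \<kappa> \<delta> w \<le> phi \<kappa> \<delta> b1" using w ab1 by (intro phi_mono[OF d k]) auto
      moreover have "phi \<kappa> \<delta> b1 = \<delta> - c'" unfolding b1_def using False assms by (intro phi_psi[OF d k]) auto
      ultimately show ?thesis by simp
    qed
    have p: "\<kappa> * ((c' + phi \<kappa> \<delta> w) - (c + phi \<kappa> \<delta> w)) / \<delta> \<le> psi \<kappa> \<delta> (c' + phi \<kappa> \<delta> w) - psi \<kappa> \<delta> (c + phi \<kappa> \<delta> w)"
      using lo hi assms k2 by (intro psi_lb[OF d k]) auto
    have kq: "S / (S + lam0) \<le> kk w" using kk_ge w01 by auto
    have "S / (S + lam0) * (\<kappa> * (c' - c) / \<delta>) \<le> kk w * (psi \<kappa> \<delta> (c' + phi \<kappa> \<delta> w) - psi \<kappa> \<delta> (c + phi \<kappa> \<delta> w))"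
      using p kq assms k d S l0 kk_pos[of w] w01 by (intro mult_mono) auto
    then show ?thesis unfolding A_def q_def by (simp add: algebra_simps)
  qed
  have "integral {a1..b1} (\<lambda>_. A) \<le> integral {a1..b1} q"
    using qA ab1 by (intro integral_le qi) auto
  also have "integral {a1..b1} q \<le> integral {0..1} q"
    using ab1 qnn by (intro integral_subset_le qi) auto
  finally have "(b1 - a1) * A \<le> integral {0..1} q" using ab1 by simp
  then show ?thesis using F_diff unfolding q_def A_def a1_def b1_def by (simp add: mult.commute mult.left_commute)
qed

definition "Ka a = \<kappa> / \<delta> * (min a \<delta> / \<delta>) powr (\<kappa> - 1)"

lemma Ka_pos: "0 < a \<Longrightarrow> 0 < Ka a"
  using k d by (simp add: Ka_def)

lemma F_UBpos:
  assumes "0 < a" "a \<le> c" "c \<le> c'"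
  shows "F c' - F c \<le> S / lam0 * Ka a * (c' - c)"
proof -
  have "integral {0..1} (\<lambda>w. psi \<kappa> \<delta> (c' + phi \<kappa> \<delta> w) * kk w - psi \<kappa> \<delta> (c + phi \<kappa> \<delta> w) * kk w)
      \<le> integral {0..1} (\<lambda>_::real. S / lam0 * Ka a * (c' - c))"
  proof (rule integral_le[OF diff_int])
    fix w :: real assume w: "w \<in> {0..1}"
    have u: "psi \<kappa> \<delta> (c' + phi \<kappa> \<delta> w) - psi \<kappa> \<delta> (c + phi \<kappa> \<delta> w) \<le> Ka a * ((c' + phi \<kappa> \<delta> w) - (c + phi \<kappa> \<delta> w))"
      unfolding Ka_def using assms phi_range[OF d k, of w] w k2 by (intro psi_ub[OF d k]) auto
    have m: "psi \<kappa> \<delta> (c + phi \<kappa> \<delta> w) \<le> psi \<kappa> \<delta> (c' + phi \<kappa> \<delta> w)"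
      using assms by (intro psi_mono[OF d k]) auto
    have "(psi \<kappa> \<delta> (c' + phi \<kappa> \<delta> w) - psi \<kappa> \<delta> (c + phi \<kappa> \<delta> w)) * kk w \<le> (Ka a * (c' - c)) * (S / lam0)"
      using u m kk_le[of w] kk_pos[of w] w Ka_pos[OF assms(1)] assms by (intro mult_mono) auto
    moreover have "psi \<kappa> \<delta> (c' + phi \<kappa> \<delta> w) * kk w - psi \<kappa> \<delta> (c + phi \<kappa> \<delta> w) * kk w
       = (psi \<kappa> \<delta> (c' + phi \<kappa> \<delta> w) - psi \<kappa> \<delta> (c + phi \<kappa> \<delta> w)) * kk w"
      by (simp add: left_diff_distrib)
    moreover have "(Ka a * (c' - c)) * (S / lam0) = S / lam0 * Ka a * (c' - c)" by simp
    ultimately show "psi \<kappa> \<delta> (c' + phi \<kappa> \<delta> w) * kk w - psi \<kappa> \<delta> (c + phi \<kappa> \<delta> w) * kk w \<le> S / lam0 * Ka a * (c' - c)"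
      by linarith
  qed auto
  then show ?thesis using F_diff by simp
qed

end


context KL begin

definition "KK w = ln (S * w + lam0) - ln lam0"

lemma KK_deriv: "0 \<le> w \<Longrightarrow> (KK has_real_derivative kk w) (at w)"
  unfolding KK_def using DERIV_diff[OF kk_deriv DERIV_const, of w "ln lam0"] by simp

lemma KK_cont: "continuous_on {0..1} KK"
  by (rule DERIV_continuous_on[where D=kk]) (auto intro: has_field_derivative_at_within KK_deriv)

lemma KK1: "KK 1 = L"
proof -
  have "ln ((S + lam0) / lam0) = ln (S + lam0) - ln lam0" using S l0 by (simp add: ln_div)
  moreover have "(S + lam0) / lam0 = 1 + S / lam0" using l0 by (simp add: field_simps)
  ultimately show ?thesis by (simp add: L_def KK_def)
qed

lemma KK_lip:
  assumes "0 \<le> x" "x \<le> y"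
  shows "KK y - KK x \<le> S / lam0 * (y - x)"
proof -
  have px: "0 < S * x + lam0" and py: "0 < S * y + lam0" using Swpos assms by auto
  have "KK y - KK x = ln ((S * y + lam0) / (S * x + lam0))"
    using px py by (simp add: KK_def ln_div)
  also have "\<dots> \<le> (S * y + lam0) / (S * x + lam0) - 1"
    using px py by (intro ln_le_minus_one) simp
  also have "\<dots> = S * (y - x) / (S * x + lam0)"
    using px by (simp add: field_simps)
  also have "\<dots> \<le> S * (y - x) / lam0"
    using assms S l0 px by (intro divide_left_mono) (auto simp: add_nonneg_pos)
  finally show ?thesis by simp
qed

lemma KKpsi_cont: "continuous_on {0..1} (\<lambda>v. KK (psi \<kappa> \<delta> (phi \<kappa> \<delta> v + b)))"
proof -
  have phc: "continuous_on {0..1} (phi \<kappa> \<delta>)"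
    by (rule continuous_on_subset[OF phi_cont[OF k]]) auto
  have "continuous_on {0..1} (\<lambda>v. psi \<kappa> \<delta> (phi \<kappa> \<delta> v + b))"
    by (rule continuous_on_compose2[OF psi_cont[OF d k, of UNIV]]) (auto intro!: continuous_intros phc)
  then show ?thesis
    by (rule continuous_on_compose2[OF KK_cont]) (use psi_nonneg psi_le1[OF d k] in auto)
qed

lemma ALT:
  assumes a0: "0 < a0" "a0 < \<delta>"
  shows "F (- a0) = L - integral {0..1} (\<lambda>v. KK (psi \<kappa> \<delta> (phi \<kappa> \<delta> v + a0)))"
proof -
  define ph where "ph = phi \<kappa> \<delta>"
  define f where "f w = psi \<kappa> \<delta> (ph w - a0) * kk w" for w
  define w1 where "w1 = psi \<kappa> \<delta> a0"
  define v1 where "v1 = psi \<kappa> \<delta> (\<delta> - a0)"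
  define gg where "gg v = ((ph v + a0) / \<delta>) powr \<kappa>" for v
  define dph where "dph v = \<delta> * ((1/\<kappa>) * v powr (1/\<kappa> - 1))" for v
  define gg' where "gg' v = \<kappa> * ((ph v + a0) / \<delta>) powr (\<kappa> - 1) * (dph v / \<delta>)" for v
  have psi0: "psi \<kappa> \<delta> 0 = 0" using psi_zero[OF _ d] by simp
  have psid: "psi \<kappa> \<delta> \<delta> = 1" by (simp add: psi_one)
  have w1: "0 < w1" "w1 < 1" unfolding w1_def
    using psi_strict[OF d k, of 0 a0] psi_strict[OF d k, of a0 \<delta>] a0 psi0 psid by auto
  have v1: "0 < v1" "v1 < 1" unfolding v1_def
    using psi_strict[OF d k, of 0 "\<delta> - a0"] psi_strict[OF d k, of "\<delta> - a0" \<delta>] a0 psi0 psid by auto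
  have phw1: "ph w1 = a0" unfolding ph_def w1_def using a0 by (intro phi_psi[OF d k]) auto
  have phv1: "ph v1 = \<delta> - a0" unfolding ph_def v1_def using a0 by (intro phi_psi[OF d k]) auto
  have phc: "continuous_on {0..1} ph" unfolding ph_def
    by (rule continuous_on_subset[OF phi_cont[OF k]]) auto
  have ph_rng: "0 \<le> ph v" "ph v \<le> \<delta>" if "v \<in> {0..1}" for v
    using phi_range[OF d k] that unfolding ph_def by auto
  have ph_le: "ph v \<le> \<delta> - a0" if "v \<in> {0..v1}" for v
    using phi_mono[OF d k, of v v1] that phv1 unfolding ph_def by auto
  have gg_eq: "gg v = psi \<kappa> \<delta> (ph v + a0)" if "v \<in> {0..v1}" for v
  proof -
    have "0 \<le> ph v" using ph_rng[of v] that v1 by auto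
    then have "min (max (ph v + a0) 0) \<delta> = ph v + a0" using ph_le[OF that] a0 by auto
    then show ?thesis unfolding gg_def using psi_alt[OF d] by simp
  qed
  have gg_rng: "0 \<le> gg v" "gg v \<le> 1" if "v \<in> {0..v1}" for v
    using gg_eq[OF that] psi_nonneg psi_le1[OF d k] by auto
  have phgg: "ph (gg v) = ph v + a0" if "v \<in> {0..v1}" for v
  proof -
    have "0 \<le> ph v" using ph_rng[of v] that v1 by auto
    then show ?thesis unfolding gg_eq[OF that] ph_def using ph_le[OF that] a0
      by (intro phi_psi[OF d k]) (auto simp: ph_def)
  qed
  have gg0: "gg 0 = w1" using gg_eq[of 0] v1 by (simp add: ph_def phi_0 w1_def)
  have ggv1: "gg v1 = 1" using gg_eq[of v1] v1 phv1 by (simp add: psid)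
  have psc: "continuous_on {0..1} (\<lambda>w. psi \<kappa> \<delta> (ph w - a0))"
    by (rule continuous_on_compose2[OF psi_cont[OF d k, of UNIV]]) (auto intro!: continuous_intros phc)
  have fc: "continuous_on {0..1} f" unfolding f_def by (intro continuous_intros psc kk_cont)
  have fi: "f integrable_on {a..b}" if "0 \<le> a" "b \<le> 1" for a b
    using that by (intro integrable_continuous_real continuous_on_subset[OF fc]) auto
  have s1: "integral {0..1} f = integral {w1..1} f"
  proof -
    have "integral {0..w1} f = integral {0..w1} (\<lambda>_::real. 0::real)"
    proof (rule integral_cong)
      fix w assume w: "w \<in> {0..w1}"
      then have "ph w \<le> ph w1" unfolding ph_def by (intro phi_mono[OF d k]) auto
      then show "f w = 0" unfolding f_def using phw1 psi_zero[OF _ d] by simp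
    qed
    moreover have "integral {0..w1} f + integral {w1..1} f = integral {0..1} f"
      using w1 by (intro hk_combine fi) auto
    ultimately show ?thesis by simp
  qed
  have ggc: "continuous_on {0..v1} gg"
  proof -
    have "continuous_on {0..v1} ph" using v1 by (intro continuous_on_subset[OF phc]) auto
    moreover have "\<forall>v\<in>{0..v1}. (ph v + a0) / \<delta> \<noteq> 0"
    proof
      fix v assume "v \<in> {0..v1}"
      then have "0 \<le> ph v" using ph_rng[of v] v1 by auto
      then show "(ph v + a0) / \<delta> \<noteq> 0" using a0 d by auto
    qed
    ultimately show ?thesis unfolding gg_def
      by (intro continuous_intros) auto
  qed
  have ggd: "(gg has_real_derivative gg' x) (at x)" if "0 < x" for x
  proof -
    have b: "((\<lambda>v. (ph v + a0) / \<delta>) has_real_derivative dph x / \<delta>) (at x)"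
      using DERIV_cdivide[OF DERIV_add[OF phi_deriv[OF that, of \<kappa> \<delta>] DERIV_const[of a0]], of \<delta>]
      by (simp add: ph_def dph_def)
    have pos: "0 < (ph x + a0) / \<delta>"
      using a0 d phi_pos[OF d k that] by (simp add: ph_def)
    show ?thesis
      unfolding gg_def gg'_def by (rule DERIV_chain2[OF has_real_derivative_powr[OF pos] b])
  qed
  have sub: "((\<lambda>v. gg' v *\<^sub>R f (gg v)) has_integral integral {gg 0..gg v1} f) {0..v1}"
  proof (rule has_integral_substitution_strong[where s="{0}" and c=0 and d=1])
    show "gg 0 \<le> gg v1" using gg0 ggv1 w1 by simp
    show "gg ` {0..v1} \<subseteq> {0..1}" using gg_rng by auto
    show "continuous_on {0..1} f" by (rule fc)
    show "continuous_on {0..v1} gg" by (rule ggc)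
    show "(gg has_real_derivative gg' x) (at x within {0..v1})" if "x \<in> {0..v1} - {0}" for x
      using ggd[of x] that by (auto intro: has_field_derivative_at_within)
  qed (use v1 in auto)
  have sub2: "((\<lambda>v. v * kk (gg v) * gg' v) has_integral integral {w1..1} f) {0..v1}"
  proof -
    have eq: "gg' v *\<^sub>R f (gg v) = v * kk (gg v) * gg' v" if "v \<in> {0..v1}" for v
    proof -
      have "psi \<kappa> \<delta> (ph (gg v) - a0) = v"
        using phgg[OF that] psi_phi[OF d k, of v] that v1 by (simp add: ph_def)
      then show ?thesis by (simp add: f_def)
    qed
    show ?thesis using sub unfolding gg0 ggv1 by (rule has_integral_eq[rotated]) (rule eq)
  qed
  have KKggc: "continuous_on {0..v1} (\<lambda>v. KK (gg v))"
    by (rule continuous_on_compose2[OF KK_cont ggc]) (use gg_rng in auto)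
  define R where "R v = v * KK (gg v)" for v
  have ftc: "((\<lambda>v. KK (gg v) + v * kk (gg v) * gg' v) has_integral (R v1 - R 0)) {0..v1}"
  proof (rule fundamental_theorem_of_calculus_interior_strong[where S="{}"])
    show "continuous_on {0..v1} R" unfolding R_def by (intro continuous_intros KKggc)
    fix v :: real assume v: "v \<in> {0<..<v1} - {}"
    then have vv: "v \<in> {0..v1}" by auto
    have "((\<lambda>v. KK (gg v)) has_real_derivative kk (gg v) * gg' v) (at v)"
      by (rule DERIV_chain2[OF KK_deriv ggd]) (use gg_rng[OF vv] v in auto)
    from DERIV_mult[OF DERIV_ident this]
    have "(R has_real_derivative KK (gg v) + v * kk (gg v) * gg' v) (at v)"
      unfolding R_def by (rule DERIV_cong) (simp add: algebra_simps)
    then show "(R has_vector_derivative KK (gg v) + v * kk (gg v) * gg' v) (at v)"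
      by (simp add: has_real_derivative_iff_has_vector_derivative)
  qed (use v1 in auto)
  have KKi: "(\<lambda>v. KK (gg v)) integrable_on {0..v1}" by (rule integrable_continuous_real[OF KKggc])
  have "((\<lambda>v. KK (gg v) + v * kk (gg v) * gg' v - KK (gg v)) has_integral (R v1 - R 0 - integral {0..v1} (\<lambda>v. KK (gg v)))) {0..v1}"
    by (rule has_integral_diff[OF ftc integrable_integral[OF KKi]])
  then have "((\<lambda>v. v * kk (gg v) * gg' v) has_integral (R v1 - R 0 - integral {0..v1} (\<lambda>v. KK (gg v)))) {0..v1}"
    by simp
  then have "integral {w1..1} f = R v1 - R 0 - integral {0..v1} (\<lambda>v. KK (gg v))"
    by (rule has_integral_unique[OF sub2])
  moreover have "R v1 = v1 * L" "R 0 = 0" unfolding R_def ggv1 KK1 by auto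
  ultimately have s4: "integral {w1..1} f = v1 * L - integral {0..v1} (\<lambda>v. KK (gg v))"
    by simp
  have KKpi: "(\<lambda>v. KK (psi \<kappa> \<delta> (ph v + a0))) integrable_on {a..b}" if "0 \<le> a" "b \<le> 1" for a b
    using that unfolding ph_def by (intro integrable_continuous_real continuous_on_subset[OF KKpsi_cont]) auto
  have s6a: "integral {0..v1} (\<lambda>v. KK (psi \<kappa> \<delta> (ph v + a0))) = integral {0..v1} (\<lambda>v. KK (gg v))"
    by (rule integral_cong) (simp add: gg_eq)
  have s6b: "integral {v1..1} (\<lambda>v. KK (psi \<kappa> \<delta> (ph v + a0))) = integral {v1..1} (\<lambda>_::real. L)"
  proof (rule integral_cong)
    fix v assume v: "v \<in> {v1..1}"
    then have "ph v1 \<le> ph v" unfolding ph_def using v1 by (intro phi_mono[OF d k]) auto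
    then have "psi \<kappa> \<delta> (ph v + a0) = 1" using phv1 by (intro psi_one) simp
    then show "KK (psi \<kappa> \<delta> (ph v + a0)) = L" using KK1 by simp
  qed
  have s6: "integral {0..1} (\<lambda>v. KK (psi \<kappa> \<delta> (ph v + a0))) = integral {0..v1} (\<lambda>v. KK (gg v)) + (1 - v1) * L"
  proof -
    have "integral {0..v1} (\<lambda>v. KK (psi \<kappa> \<delta> (ph v + a0))) + integral {v1..1} (\<lambda>v. KK (psi \<kappa> \<delta> (ph v + a0)))
        = integral {0..1} (\<lambda>v. KK (psi \<kappa> \<delta> (ph v + a0)))"
      using v1 by (intro hk_combine KKpi) auto
    then show ?thesis using s6a s6b v1 by simp
  qed
  have s7: "F (- a0) = integral {0..1} f"
    unfolding F_def f_def ph_def by (rule integral_cong) simp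
  have "F (- a0) = L - integral {0..1} (\<lambda>v. KK (psi \<kappa> \<delta> (ph v + a0)))"
    using s1 s4 s6 s7 by (simp add: algebra_simps)
  then show ?thesis unfolding ph_def .
qed

lemma F_UBneg:
  assumes "0 < a" "- \<delta> < c" "c \<le> c'" "c' \<le> - a"
  shows "F c' - F c \<le> S / lam0 * Ka a * (c' - c)"
proof -
  have Fc: "F c = L - integral {0..1} (\<lambda>v. KK (psi \<kappa> \<delta> (phi \<kappa> \<delta> v + - c)))"
    using ALT[of "- c"] assms by simp
  have Fc': "F c' = L - integral {0..1} (\<lambda>v. KK (psi \<kappa> \<delta> (phi \<kappa> \<delta> v + - c')))"
    using ALT[of "- c'"] assms by simp
  have i: "(\<lambda>v. KK (psi \<kappa> \<delta> (phi \<kappa> \<delta> v + b))) integrable_on {0..1}" for b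
    by (rule integrable_continuous_real[OF KKpsi_cont])
  have "F c' - F c = integral {0..1} (\<lambda>v. KK (psi \<kappa> \<delta> (phi \<kappa> \<delta> v + - c))) - integral {0..1} (\<lambda>v. KK (psi \<kappa> \<delta> (phi \<kappa> \<delta> v + - c')))"
    using Fc Fc' by simp
  also have "\<dots> = integral {0..1} (\<lambda>v. KK (psi \<kappa> \<delta> (phi \<kappa> \<delta> v + - c)) - KK (psi \<kappa> \<delta> (phi \<kappa> \<delta> v + - c')))"
    by (rule integral_diff[OF i i, symmetric])
  also have "\<dots> \<le> integral {0..1} (\<lambda>_::real. S / lam0 * Ka a * (c' - c))"
  proof (rule integral_le)
    show "(\<lambda>v. KK (psi \<kappa> \<delta> (phi \<kappa> \<delta> v + - c)) - KK (psi \<kappa> \<delta> (phi \<kappa> \<delta> v + - c'))) integrable_on {0..1}"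
      by (intro integrable_diff i)
    fix v :: real assume v: "v \<in> {0..1}"
    define x where "x = phi \<kappa> \<delta> v + - c'"
    define y where "y = phi \<kappa> \<delta> v + - c"
    have xy: "a \<le> x" "x \<le> y" "y - x = c' - c"
      using phi_range[OF d k, of v] v assms unfolding x_def y_def by auto
    have u: "psi \<kappa> \<delta> y - psi \<kappa> \<delta> x \<le> Ka a * (y - x)"
      unfolding Ka_def using xy assms k2 by (intro psi_ub[OF d k]) auto
    have m: "psi \<kappa> \<delta> x \<le> psi \<kappa> \<delta> y" using xy by (intro psi_mono[OF d k])
    have "KK (psi \<kappa> \<delta> y) - KK (psi \<kappa> \<delta> x) \<le> S / lam0 * (psi \<kappa> \<delta> y - psi \<kappa> \<delta> x)"
      using m psi_nonneg by (intro KK_lip) auto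
    also have "\<dots> \<le> S / lam0 * (Ka a * (y - x))"
      using u S l0 by (intro mult_left_mono) auto
    finally show "KK (psi \<kappa> \<delta> (phi \<kappa> \<delta> v + - c)) - KK (psi \<kappa> \<delta> (phi \<kappa> \<delta> v + - c')) \<le> S / lam0 * Ka a * (c' - c)"
      using xy unfolding x_def y_def by (simp add: mult.assoc)
  qed (rule Henstock_Kurzweil_Integration.integrable_const_ivl)
  finally show ?thesis by simp
qed

end


context KL begin

lemma D_mono: "x \<le> y \<Longrightarrow> D x \<le> D y"
  using F_mono[of "x - th0" "y - th0"] Sh by (simp add: D_F mult_left_mono)

lemma PL: "0 < S - lam0 * L"
  using L_lt l0 by (simp add: field_simps)

lemma D_low: "x \<le> th0 - \<delta> \<Longrightarrow> D x < 0"
  using F_low[of "x - th0"] PL by (simp add: D_F)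

lemma D_high: "x \<ge> th0 + \<delta> \<Longrightarrow> D x > 0"
proof -
  assume x: "x \<ge> th0 + \<delta>"
  have "S / L < S + h + lam0" using hc unfolding L_def by simp
  then have "S < (S + h + lam0) * L" using L_pos by (simp add: field_simps)
  then show ?thesis using F_high[of "x - th0"] x by (simp add: D_F algebra_simps)
qed

lemma D_th0: "D th0 = h * (S - lam0 * L) / S"
proof -
  have F0: "F 0 = (S - lam0 * L) / S" using F_0 S by (simp add: field_simps)
  have "D th0 = - S + lam0 * L + (S + h) * ((S - lam0 * L) / S)" by (simp add: D_F F0)
  also have "\<dots> = - (S - lam0 * L) + (S + h) * (S - lam0 * L) / S" by simp
  also have "(S + h) * (S - lam0 * L) / S = (S - lam0 * L) + h * (S - lam0 * L) / S"
    using S by (simp add: field_simps)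
  finally show ?thesis by simp
qed

lemma D_bound: "\<bar>D x\<bar> \<le> S + (S + h + lam0) * L"
proof -
  have "0 \<le> F (x - th0)" "F (x - th0) \<le> L" using F_nonneg F_le_L by auto
  then have "0 \<le> (S + h) * F (x - th0)" "(S + h) * F (x - th0) \<le> (S + h) * L"
    using Sh by (auto intro: mult_left_mono)
  moreover have "(S + h) * L + lam0 * L = (S + h + lam0) * L" by (simp add: algebra_simps)
  moreover have "0 \<le> lam0 * L" using L_pos l0 by simp
  ultimately have a: "- S + lam0 * L + (S + h) * F (x - th0) \<le> S + (S + h + lam0) * L"
    using S by linarith
  have b: "- (- S + lam0 * L + (S + h) * F (x - th0)) \<le> S + (S + h + lam0) * L"
    using \<open>0 \<le> (S + h) * F (x - th0)\<close> \<open>(S + h) * F (x - th0) \<le> (S + h) * L\<close>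
      \<open>0 \<le> lam0 * L\<close> \<open>(S + h) * L + lam0 * L = (S + h + lam0) * L\<close> S by linarith
  show ?thesis unfolding D_F abs_le_iff using a b by blast
qed

lemma D_LG:
  assumes "th0 - \<delta> < x" "x < y" "y < th0 + \<delta>" "y - x < \<delta>"
  shows "D x < D y"
proof -
  have "0 < S / (S + lam0) * (\<kappa> * ((y - th0) - (x - th0)) / \<delta>) * (psi \<kappa> \<delta> (\<delta> - (y - th0)) - psi \<kappa> \<delta> (- (x - th0)))"
    using psi_gap[of "x - th0" "y - th0"] assms S l0 k d by (intro mult_pos_pos) auto
  also have "\<dots> \<le> F (y - th0) - F (x - th0)" using assms by (intro F_LG) auto
  finally have "0 < (S + h) * (F (y - th0) - F (x - th0))" using Sh by simp
  then show ?thesis by (simp add: D_F algebra_simps)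
qed

end

theorem proposition1:
  fixes S lam0 \<kappa> \<delta> \<tau> \<alpha> \<beta> th0 h :: real
    and J :: "real \<Rightarrow> real"
  assumes "S > 0" and "lam0 > 0" and "0 < \<kappa>" and "\<kappa> < 1/2"
    and "\<delta> > 0" and "\<tau> > 0" and "\<alpha> < \<beta>"
    and "0 \<le> \<alpha> - \<delta>" and "\<beta> + \<delta> \<le> \<tau> - \<delta>"
    and "th0 \<in> {\<alpha><..<\<beta>}"
    and "h > S / ln (1 + S / lam0) - S - lam0"
    and J_def: "J = JKL S lam0 \<kappa> \<delta> \<tau> th0 h"
  shows "\<exists>thh \<in> {\<alpha> - \<delta><..<\<beta> + \<delta>}.
    (\<forall>th \<in> {\<alpha> - \<delta><..<\<beta> + \<delta>}. th \<noteq> thh \<longrightarrow> J thh < J th)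
    \<and> (\<forall>th \<in> {\<alpha> - \<delta><..<\<beta> + \<delta>}. (J has_real_derivative deriv J th) (at th))
    \<and> deriv J thh = 0
    \<and> (\<forall>th \<in> {\<alpha> - \<delta><..<\<beta> + \<delta>}. deriv J th = 0 \<longrightarrow> th = thh)
    \<and> (h > 0 \<longrightarrow> thh \<in> {th0 - \<delta><..<th0})
    \<and> (h < 0 \<longrightarrow> thh \<in> {th0<..<th0 + \<delta>})
    \<and> (h = 0 \<longrightarrow> thh = th0)
    \<and> (h \<noteq> 0 \<longrightarrow> (\<exists>m M. m > 0 \<and> M > 0 \<and>
         (\<forall>th \<in> {\<alpha> - \<delta><..<\<beta> + \<delta>}.
            m * \<bar>th - thh\<bar> \<le> \<bar>deriv J th\<bar>
          \<and> \<bar>deriv J th\<bar> \<le> M * \<bar>th - thh\<bar>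
          \<and> m / 2 * (th - thh)^2 \<le> J th - J thh
          \<and> J th - J thh \<le> M / 2 * (th - thh)^2)))"
proof -
  interpret KL S lam0 \<kappa> \<delta> \<tau> h th0 \<alpha> \<beta>
    using assms by unfold_locales auto
  have Ueq: "{\<alpha> - \<delta><..<\<beta> + \<delta>} = U" by (simp add: U_def)
  have Jd: "(J has_real_derivative D x) (at x)" if "x \<in> U" for x
    using J_deriv[OF that] J_def by simp
  have dJ: "deriv J x = D x" if "x \<in> U" for x
    using Jd[OF that] by (rule DERIV_imp_deriv)
  have Useg: "z \<in> U" if "x \<in> U" "y \<in> U" "x \<le> z" "z \<le> y" for x y z
    using that by (auto simp: U_def)
  have th0r: "\<alpha> < th0" "th0 < \<beta>" using th0 by auto
  have CU: "{th0 - \<delta>..th0 + \<delta>} \<subseteq> U" using th0r by (auto simp: U_def)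
  have th0U: "th0 \<in> U" using CU d by auto
  have Jc: "continuous_on {th0 - \<delta>..th0 + \<delta>} J"
  proof (intro continuous_at_imp_continuous_on ballI)
    fix x assume "x \<in> {th0 - \<delta>..th0 + \<delta>}"
    then show "isCont J x" using CU by (intro DERIV_isCont[OF Jd]) auto
  qed
  obtain p where p: "p \<in> {th0 - \<delta>..th0 + \<delta>}" "\<And>y. y \<in> {th0 - \<delta>..th0 + \<delta>} \<Longrightarrow> J p \<le> J y"
    using continuous_attains_inf[OF compact_Icc _ Jc] d by auto
  have pU: "p \<in> U" using CU p by auto
  have pl: "p \<noteq> th0 - \<delta>"
  proof
    assume pe: "p = th0 - \<delta>"
    then have "D p < 0" by (intro D_low) simp
    from DERIV_neg_dec_right[OF Jd[OF pU] this] obtain e where e: "e > 0" "\<And>t. t > 0 \<Longrightarrow> t < e \<Longrightarrow> J p > J (p + t)"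
      using CU p by auto
    have "J p > J (p + min (e/2) \<delta>)" using e d by (intro e(2)) auto
    moreover have "J p \<le> J (p + min (e/2) \<delta>)" using pe e d by (intro p(2)) auto
    ultimately show False by simp
  qed
  have pr: "p \<noteq> th0 + \<delta>"
  proof
    assume pe: "p = th0 + \<delta>"
    then have "D p > 0" by (intro D_high) simp
    from DERIV_pos_inc_left[OF Jd[OF pU] this] obtain e where e: "e > 0" "\<And>t. t > 0 \<Longrightarrow> t < e \<Longrightarrow> J (p - t) < J p"
      using CU p by auto
    have "J (p - min (e/2) \<delta>) < J p" using e d by (intro e(2)) auto
    moreover have "J p \<le> J (p - min (e/2) \<delta>)" using pe e d by (intro p(2)) auto
    ultimately show False by simp
  qed
  have pin: "th0 - \<delta> < p" "p < th0 + \<delta>" using p(1) pl pr by auto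
  have Dp: "D p = 0"
  proof (rule DERIV_local_min[OF Jd[OF pU]])
    show "0 < min (p - (th0 - \<delta>)) (th0 + \<delta> - p)" using pin by simp
    show "\<forall>y. \<bar>p - y\<bar> < min (p - (th0 - \<delta>)) (th0 + \<delta> - p) \<longrightarrow> J p \<le> J y"
      by (auto intro!: p(2))
  qed
  have zero_in: "th0 - \<delta> < x \<and> x < th0 + \<delta>" if "D x = 0" for x
    using D_low[of x] D_high[of x] that by (cases "x \<le> th0 - \<delta>"; cases "x \<ge> th0 + \<delta>") auto
  have uniq: "x = p" if "D x = 0" for x
  proof (rule ccontr)
    assume ne: "x \<noteq> p"
    define z1 where "z1 = min x p"
    define z2 where "z2 = max x p"
    have z: "z1 < z2" "D z1 = 0" "D z2 = 0" using ne that Dp by (auto simp: z1_def z2_def min_def max_def)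
    have zr: "th0 - \<delta> < z1" "z2 < th0 + \<delta>" using zero_in[OF that] pin by (auto simp: z1_def z2_def)
    define z3 where "z3 = z1 + min (z2 - z1) (\<delta>/2)"
    have z3: "z1 < z3" "z3 \<le> z2" "z3 - z1 < \<delta>" using z d by (auto simp: z3_def)
    have "D z1 < D z3" using z3 zr by (intro D_LG) auto
    moreover have "D z3 \<le> D z2" using z3 by (intro D_mono)
    ultimately show False using z by simp
  qed
  have Dpos: "D x > 0" if "x > p" for x
    using D_mono[of p x] that Dp uniq[of x] by force
  have Dneg: "D x < 0" if "x < p" for x
    using D_mono[of x p] that Dp uniq[of x] by force
  have strict: "J p < J th" if "th \<in> U" "th \<noteq> p" for th
  proof (cases "th > p")
    case True
    have "\<And>x. p \<le> x \<Longrightarrow> x \<le> th \<Longrightarrow> DERIV J x :> D x" using Useg[OF pU that(1)] Jd by auto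
    from MVT2[OF True this] obtain z where "p < z" "z < th" "J th - J p = (th - p) * D z" by auto
    moreover have "D z > 0" using Dpos \<open>p < z\<close> by auto
    moreover have "0 < (th - p) * D z" using True calculation by simp
    ultimately show ?thesis by linarith
  next
    case False
    then have lt: "th < p" using that by auto
    have "\<And>x. th \<le> x \<Longrightarrow> x \<le> p \<Longrightarrow> DERIV J x :> D x" using Useg[OF that(1) pU] Jd by auto
    from MVT2[OF lt this] obtain z where "th < z" "z < p" "J p - J th = (p - th) * D z" by auto
    moreover have "D z < 0" using Dneg \<open>z < p\<close> by auto
    moreover have "(p - th) * D z < 0" using lt calculation by (simp add: mult_pos_neg)
    ultimately show ?thesis by linarith
  qed
  have loc1: "h > 0 \<Longrightarrow> p \<in> {th0 - \<delta><..<th0}"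
  proof -
    assume "h > 0"
    then have "D th0 > 0" using D_th0 PL S by simp
    then have "p < th0" using D_mono[of th0 p] Dp by (cases "p < th0") auto
    then show ?thesis using pin by auto
  qed
  have loc2: "h < 0 \<Longrightarrow> p \<in> {th0<..<th0 + \<delta>}"
  proof -
    assume "h < 0"
    then have "D th0 < 0" using D_th0 PL S by (simp add: mult_neg_pos divide_neg_pos)
    then have "th0 < p" using D_mono[of p th0] Dp by (cases "th0 < p") auto
    then show ?thesis using pin by auto
  qed
  have loc3: "h = 0 \<Longrightarrow> p = th0"
    using D_th0 uniq[of th0] by simp
  have iv: "\<exists>m M. m > 0 \<and> M > 0 \<and>
         (\<forall>th \<in> U. m * \<bar>th - p\<bar> \<le> \<bar>D th\<bar> \<and> \<bar>D th\<bar> \<le> M * \<bar>th - p\<bar>)" if hne: "h \<noteq> 0"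
  proof -
    have pne: "p \<noteq> th0"
    proof
      assume "p = th0"
      then have "h * (S - lam0 * L) / S = 0" using D_th0 Dp by simp
      then show False using hne PL S by simp
    qed
    define cs where "cs = p - th0"
    have cs: "cs \<noteq> 0" "\<bar>cs\<bar> < \<delta>" using pne pin by (auto simp: cs_def)
    define a where "a = \<bar>cs\<bar> / 2"
    define \<eta> where "\<eta> = min a ((\<delta> - \<bar>cs\<bar>) / 2)"
    have a: "0 < a" using cs by (simp add: a_def)
    have e1: "\<eta> \<le> (\<delta> - \<bar>cs\<bar>) / 2" "\<eta> \<le> a" unfolding \<eta>_def by (rule min.cobounded2, rule min.cobounded1)
    have e0: "0 < \<eta>" using cs a by (auto simp: \<eta>_def)
    have eta: "0 < \<eta>" "\<eta> \<le> a" "\<bar>cs\<bar> + \<eta> < \<delta>" "2 * \<eta> < \<delta>"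
      using e0 e1 cs by auto
    define \<gamma> where "\<gamma> = psi \<kappa> \<delta> (\<delta> - cs - \<eta>) - psi \<kappa> \<delta> (- cs + \<eta>)"
    have gam: "0 < \<gamma>" unfolding \<gamma>_def
      using eta psi_strict[OF d k, of "- cs + \<eta>" "\<delta> - cs - \<eta>"] by auto
    define m0 where "m0 = (S + h) * (S / (S + lam0) * (\<kappa> / \<delta>) * \<gamma>)"
    define M0 where "M0 = (S + h) * (S / lam0 * Ka a)"
    have m0: "0 < m0" unfolding m0_def using Sh S l0 k d gam by (intro mult_pos_pos) auto
    have M0: "0 < M0" unfolding M0_def using Sh S l0 Ka_pos[OF a] by (intro mult_pos_pos) auto
    have loc: "m0 * (y - x) \<le> D y - D x \<and> D y - D x \<le> M0 * (y - x)"
      if xy: "p - \<eta> \<le> x" "x \<le> y" "y \<le> p + \<eta>" for x y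
    proof
      define c where "c = x - th0"
      define c' where "c' = y - th0"
      have cc: "cs - \<eta> \<le> c" "c \<le> c'" "c' \<le> cs + \<eta>" "c' - c = y - x"
        using xy by (auto simp: c_def c'_def cs_def)
      have DF: "D y - D x = (S + h) * (F c' - F c)"
        by (simp add: D_F c_def c'_def algebra_simps)
      show "m0 * (y - x) \<le> D y - D x"
      proof (cases "x = y")
        case True then show ?thesis by simp
      next
        case False
        then have lt: "c < c'" using cc xy by auto
        have r: "- \<delta> < c" "c' < \<delta>" "c' - c < \<delta>" using cc eta by auto
        have g: "\<gamma> \<le> psi \<kappa> \<delta> (\<delta> - c') - psi \<kappa> \<delta> (- c)"
        proof -
          have "psi \<kappa> \<delta> (\<delta> - cs - \<eta>) \<le> psi \<kappa> \<delta> (\<delta> - c')" using cc by (intro psi_mono[OF d k]) auto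
          moreover have "psi \<kappa> \<delta> (- c) \<le> psi \<kappa> \<delta> (- cs + \<eta>)" using cc by (intro psi_mono[OF d k]) auto
          ultimately show ?thesis unfolding \<gamma>_def by simp
        qed
        have "S / (S + lam0) * (\<kappa> * (c' - c) / \<delta>) * \<gamma> \<le> S / (S + lam0) * (\<kappa> * (c' - c) / \<delta>) * (psi \<kappa> \<delta> (\<delta> - c') - psi \<kappa> \<delta> (- c))"
          using g lt S l0 k d by (intro mult_left_mono) auto
        also have "\<dots> \<le> F c' - F c" using F_LG[OF r(1) lt r(2) r(3)] .
        finally have "(S + h) * (S / (S + lam0) * (\<kappa> * (c' - c) / \<delta>) * \<gamma>) \<le> (S + h) * (F c' - F c)"
          using Sh by (intro mult_left_mono) auto
        moreover have "(S + h) * (S / (S + lam0) * (\<kappa> * (c' - c) / \<delta>) * \<gamma>) = m0 * (y - x)"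
          unfolding m0_def cc(4)[symmetric] by (simp add: field_simps)
        ultimately show ?thesis using DF by simp
      qed
      have ub: "F c' - F c \<le> S / lam0 * Ka a * (c' - c)"
      proof (cases "cs > 0")
        case True
        then have "a \<le> c" using cc eta by (auto simp: a_def)
        then show ?thesis using F_UBpos[OF a _ cc(2)] by simp
      next
        case False
        then have "cs < 0" using cs by simp
        then have "c' \<le> - a" using cc eta by (auto simp: a_def)
        moreover have "- \<delta> < c" using cc eta by auto
        ultimately show ?thesis using F_UBneg[OF a _ cc(2)] by simp
      qed
      have "(S + h) * (F c' - F c) \<le> (S + h) * (S / lam0 * Ka a * (c' - c))"
        using ub Sh by (intro mult_left_mono) auto
      also have "\<dots> = M0 * (y - x)" unfolding M0_def cc(4)[symmetric] by (simp add: algebra_simps)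
      finally show "D y - D x \<le> M0 * (y - x)" using DF by simp
    qed
    define B where "B = S + (S + h + lam0) * L"
    define R where "R = \<beta> - \<alpha> + 2 * \<delta>"
    have R: "0 < R" using ab d by (simp add: R_def)
    have B: "0 \<le> B" using D_bound[of p] by (simp add: B_def)
    define m where "m = min m0 (m0 * \<eta> / R)"
    define M where "M = max M0 (B / \<eta>)"
    have mpos: "0 < m" using m0 eta R by (simp add: m_def)
    have Mpos: "0 < M" using M0 by (simp add: M_def)
    have "\<forall>th \<in> U. m * \<bar>th - p\<bar> \<le> \<bar>D th\<bar> \<and> \<bar>D th\<bar> \<le> M * \<bar>th - p\<bar>"
    proof
      fix th assume th: "th \<in> U"
      have tR: "\<bar>th - p\<bar> \<le> R" using th pU by (auto simp: U_def R_def)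
      show "m * \<bar>th - p\<bar> \<le> \<bar>D th\<bar> \<and> \<bar>D th\<bar> \<le> M * \<bar>th - p\<bar>"
      proof (cases "\<bar>th - p\<bar> \<le> \<eta>")
        case True
        have both: "m0 * \<bar>th - p\<bar> \<le> \<bar>D th\<bar> \<and> \<bar>D th\<bar> \<le> M0 * \<bar>th - p\<bar>"
        proof (cases "th \<ge> p")
          case True2: True
          have "m0 * (th - p) \<le> D th - D p \<and> D th - D p \<le> M0 * (th - p)"
            using True True2 eta by (intro loc) auto
          moreover have "0 \<le> m0 * (th - p)" using m0 True2 by simp
          ultimately have "0 \<le> D th" "m0 * (th - p) \<le> D th" "D th \<le> M0 * (th - p)" using Dp by auto
          then show ?thesis using True2 by simp
        next
          case False
          have "m0 * (p - th) \<le> D p - D th \<and> D p - D th \<le> M0 * (p - th)"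
            using True False eta by (intro loc) auto
          moreover have "0 \<le> m0 * (p - th)" using m0 False by simp
          ultimately have "D th \<le> 0" "m0 * (p - th) \<le> - D th" "- D th \<le> M0 * (p - th)" using Dp by auto
          then show ?thesis using False by simp
        qed
        have "m * \<bar>th - p\<bar> \<le> m0 * \<bar>th - p\<bar>" by (intro mult_right_mono) (auto simp: m_def)
        moreover have "M0 * \<bar>th - p\<bar> \<le> M * \<bar>th - p\<bar>" by (intro mult_right_mono) (auto simp: M_def)
        ultimately show ?thesis using both by linarith
      next
        case False
        have lo: "m0 * \<eta> \<le> \<bar>D th\<bar>"
        proof (cases "th > p")
          case True
          have "m0 * ((p + \<eta>) - p) \<le> D (p + \<eta>) - D p" using eta by (intro loc[THEN conjunct1]) auto
          moreover have "D (p + \<eta>) \<le> D th" using False True by (intro D_mono) auto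
          ultimately show ?thesis using Dp by simp
        next
          case False2: False
          have "m0 * (p - (p - \<eta>)) \<le> D p - D (p - \<eta>)" using eta by (intro loc[THEN conjunct1]) auto
          moreover have "D th \<le> D (p - \<eta>)" using False False2 by (intro D_mono) auto
          ultimately show ?thesis using Dp by simp
        qed
        have "m * \<bar>th - p\<bar> \<le> (m0 * \<eta> / R) * \<bar>th - p\<bar>" by (intro mult_right_mono) (auto simp: m_def)
        also have "\<dots> \<le> (m0 * \<eta> / R) * R" using tR m0 eta R by (intro mult_left_mono) auto
        also have "\<dots> = m0 * \<eta>" using R by simp
        finally have A1: "m * \<bar>th - p\<bar> \<le> \<bar>D th\<bar>" using lo by linarith
        have "\<bar>D th\<bar> \<le> B" using D_bound[of th] by (simp add: B_def)
        also have "B = (B / \<eta>) * \<eta>" using eta by simp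
        also have "(B / \<eta>) * \<eta> \<le> (B / \<eta>) * \<bar>th - p\<bar>" using False B eta by (intro mult_left_mono) auto
        also have "\<dots> \<le> M * \<bar>th - p\<bar>" by (intro mult_right_mono) (auto simp: M_def)
        finally show ?thesis using A1 by simp
      qed
    qed
    then show ?thesis using mpos Mpos by blast
  qed

  have quad: "m / 2 * (th - p)^2 \<le> J th - J p \<and> J th - J p \<le> M / 2 * (th - p)^2"
    if mM: "m > 0" "M > 0" "\<forall>th \<in> U. m * \<bar>th - p\<bar> \<le> \<bar>D th\<bar> \<and> \<bar>D th\<bar> \<le> M * \<bar>th - p\<bar>"
      and th: "th \<in> U" for m M th
  proof -
    have sgp: "m * (x - p) \<le> D x \<and> D x \<le> M * (x - p)" if "x \<in> U" "x \<ge> p" for x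
    proof -
      have "0 \<le> D x" using Dp Dpos[of x] that by (cases "x = p") auto
      then show ?thesis using mM(3) that by auto
    qed
    have sgn: "M * (x - p) \<le> D x \<and> D x \<le> m * (x - p)" if "x \<in> U" "x \<le> p" for x
    proof -
      have "D x \<le> 0" using Dp Dneg[of x] that by (cases "x = p") auto
      moreover have "m * \<bar>x - p\<bar> \<le> \<bar>D x\<bar>" "\<bar>D x\<bar> \<le> M * \<bar>x - p\<bar>" using mM(3) that by auto
      ultimately have "m * (p - x) \<le> - D x" "- D x \<le> M * (p - x)" using that by auto
      moreover have "M * (x - p) = - (M * (p - x))" "m * (x - p) = - (m * (p - x))" by (simp_all add: algebra_simps)
      ultimately show ?thesis by linarith
    qed
    have sq: "((\<lambda>x. (x - p)^2) has_real_derivative 2 * (x - p)) (at x)" for x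
      by (auto intro!: derivative_eq_intros)
    have g1d: "((\<lambda>x. J x - m / 2 * (x - p)^2) has_real_derivative D x - m * (x - p)) (at x)" if "x \<in> U" for x
      by (rule DERIV_cong[OF DERIV_diff[OF Jd[OF that] DERIV_cmult[OF sq, of "m/2"]]]) simp
    have g2d: "((\<lambda>x. M / 2 * (x - p)^2 - J x) has_real_derivative M * (x - p) - D x) (at x)" if "x \<in> U" for x
      by (rule DERIV_cong[OF DERIV_diff[OF DERIV_cmult[OF sq, of "M/2"] Jd[OF that]]]) simp
    show ?thesis
    proof (cases "th \<ge> p")
      case True
      have "(\<lambda>x. J x - m / 2 * (x - p)^2) p \<le> (\<lambda>x. J x - m / 2 * (x - p)^2) th"
      proof (rule DERIV_nonneg_imp_nondecreasing[OF True])
        fix x assume x: "p \<le> x" "x \<le> th"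
        then have xU: "x \<in> U" using Useg[OF pU th] by auto
        show "\<exists>y. DERIV (\<lambda>x. J x - m / 2 * (x - p)^2) x :> y \<and> 0 \<le> y"
          using g1d[OF xU] sgp[OF xU] x by auto
      qed
      moreover have "(\<lambda>x. M / 2 * (x - p)^2 - J x) p \<le> (\<lambda>x. M / 2 * (x - p)^2 - J x) th"
      proof (rule DERIV_nonneg_imp_nondecreasing[OF True])
        fix x assume x: "p \<le> x" "x \<le> th"
        then have xU: "x \<in> U" using Useg[OF pU th] by auto
        show "\<exists>y. DERIV (\<lambda>x. M / 2 * (x - p)^2 - J x) x :> y \<and> 0 \<le> y"
          using g2d[OF xU] sgp[OF xU] x by auto
      qed
      ultimately show ?thesis by simp
    next
      case False
      then have le: "th \<le> p" by simp
      have "(\<lambda>x. - (J x - m / 2 * (x - p)^2)) th \<le> (\<lambda>x. - (J x - m / 2 * (x - p)^2)) p"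
      proof (rule DERIV_nonneg_imp_nondecreasing[OF le])
        fix x assume x: "th \<le> x" "x \<le> p"
        then have xU: "x \<in> U" using Useg[OF th pU] by auto
        show "\<exists>y. DERIV (\<lambda>x. - (J x - m / 2 * (x - p)^2)) x :> y \<and> 0 \<le> y"
          using DERIV_minus[OF g1d[OF xU]] sgn[OF xU] x by auto
      qed
      moreover have "(\<lambda>x. - (M / 2 * (x - p)^2 - J x)) th \<le> (\<lambda>x. - (M / 2 * (x - p)^2 - J x)) p"
      proof (rule DERIV_nonneg_imp_nondecreasing[OF le])
        fix x assume x: "th \<le> x" "x \<le> p"
        then have xU: "x \<in> U" using Useg[OF th pU] by auto
        show "\<exists>y. DERIV (\<lambda>x. - (M / 2 * (x - p)^2 - J x)) x :> y \<and> 0 \<le> y"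
          using DERIV_minus[OF g2d[OF xU]] sgn[OF xU] x by auto
      qed
      ultimately show ?thesis by simp
    qed
  qed

  show ?thesis
    unfolding Ueq
  proof (intro bexI conjI ballI impI)
    show "p \<in> U" by (rule pU)
    show "J p < J th" if "th \<in> U" "th \<noteq> p" for th using strict that by auto
    show "(J has_real_derivative deriv J th) (at th)" if "th \<in> U" for th
      using Jd[OF that] dJ[OF that] by simp
    show "deriv J p = 0" using dJ[OF pU] Dp by simp
    show "th = p" if "th \<in> U" "deriv J th = 0" for th using that dJ uniq by auto
    show "p \<in> {th0 - \<delta><..<th0}" if "h > 0" using loc1 that by auto
    show "p \<in> {th0<..<th0 + \<delta>}" if "h < 0" using loc2 that by auto
    show "p = th0" if "h = 0" using loc3 that by auto
    show "\<exists>m M. m > 0 \<and> M > 0 \<and>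
         (\<forall>th \<in> U. m * \<bar>th - p\<bar> \<le> \<bar>deriv J th\<bar>
          \<and> \<bar>deriv J th\<bar> \<le> M * \<bar>th - p\<bar>
          \<and> m / 2 * (th - p)^2 \<le> J th - J p
          \<and> J th - J p \<le> M / 2 * (th - p)^2)" if hh: "h \<noteq> 0"
    proof -
      obtain m M where mM: "m > 0" "M > 0" "\<forall>th \<in> U. m * \<bar>th - p\<bar> \<le> \<bar>D th\<bar> \<and> \<bar>D th\<bar> \<le> M * \<bar>th - p\<bar>"
        using iv[OF hh] by blast
      show ?thesis using mM quad[OF mM] dJ by (intro exI[of _ m] exI[of _ M]) auto
    qed
  qed
qed


end
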